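(* Let $G$ be a reaction network with one-dimensional stoichiometric subspace and suppose $cap_{pos}(G)=2N+1$ with $0\le N<+\infty$. If for a rate-constant vector $\kappa^*$ and a total-constant vector $c^*$, $G$ has $2N+1$ nondegenerate positive steady states in $\mathcal P_{c^*}$, then $N+1$ of them are stable if $\sum_{j\in\mathcal L}(\beta_{1j}-\alpha_{1j})\kappa^*_j\prod_{i\in\mathcal J}|A_i|^{\alpha_{ij}}\prod_{i\in\{1,\dots,s\}\setminus\mathcal J}B_i^{\alpha_{ij}}\prod_{k\in\mathcal H,\,k\ne\tau}\Big(\frac{B_k}{|A_k|}-\frac{A_k}{|A_k|}\frac{B_\tau}{A_\tau}\Big)^{\gamma_{kj}}>0$ holds, and $N$ of them are stable if this inequality does not hold (the quantities being computed from $c^*$).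
   Context: A reaction network $G$ has species $X_1,\dots,X_s$ and $m$ reactions $\sum_{i}\alpha_{ij}X_i\to\sum_i\beta_{ij}X_i$, $\alpha_{ij},\beta_{ij}\in\mathbb Z_{\ge0}$, $(\alpha_{1j},\dots,\alpha_{sj})\neq(\beta_{1j},\dots,\beta_{sj})$. $\mathcal N$ has entries $\beta_{ij}-\alpha_{ij}$, $S=\mathrm{im}\,\mathcal N$. For $\kappa\in\mathbb R^m_{>0}$, $f(\kappa;x)=\mathcal N(\kappa_1\prod_i x_i^{\alpha_{i1}},\dots,\kappa_m\prod_i x_i^{\alpha_{im}})^\top$. Since $S$ is one-dimensional, species are labelled so that $\beta_{11}-\alpha_{11}\ne0$; for $c\in\mathbb R^{s-1}$, $\mathcal P_c=\{x\in\mathbb R^s_{\ge0}:(\beta_{i1}-\alpha_{i1})x_1-(\beta_{11}-\alpha_{11})x_i=c_{i-1},\ i=2,\dots,s\}$. A steady state is $x\ge0$ with $f(\kappa;x)=0$; positive if $x>0$; nondegenerate if $\mathrm{Jac}_f(x)(S)=S$; stable if nondegenerate and all nonzero eigenvalues of $\mathrm{Jac}_f(x)$ have negative real parts. $cap_{pos}(G)$ is the maximal $N\in\mathbb Z_{\ge0}\cup\{+\infty\}$ such that for some $\kappa,c$, $G$ has $N$ positive steady states in $\mathcal P_c$. Notation for $c^*$: $A_1=1,B_1=0$, $A_i=\frac{\beta_{i1}-\alpha_{i1}}{\beta_{11}-\alpha_{11}}$, $B_i=-\frac{c^*_{i-1}}{\beta_{11}-\alpha_{11}}$ ($i\ge2$).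 $[i]=\{k:A_k\ne0,B_k/A_k=B_i/A_i\}$ if $A_i\ne0$, $[i]=\{k:A_k=0\}$ otherwise; species labelled so that $1,\dots,r$ represent the $r$ distinct classes. $\varphi_k=\min_j\sum_{i\in[k]}\alpha_{ij}$, $\gamma_{kj}=\sum_{i\in[k]}\alpha_{ij}-\varphi_k$. $\mathcal J=\{i:A_i\ne0\}$, $\mathcal H=\{k\in\{1,\dots,r\}\cap\mathcal J:\gamma_{k1},\dots,\gamma_{km}\text{ not all equal}\}$. Standing assumption: if for some rate constants $G$ has $N$ positive steady states in $\mathcal P_{c^*}$ with $0<N<\infty$, species are labelled so that $1\in\mathcal H$. $I_i=(-B_i/A_i,+\infty)$ if $A_i>0$, $(0,+\infty)$ if $A_i=0$, $(0,-B_i/A_i)$ if $A_i<0$; $I=\bigcap_{k\in\mathcal H}I_k$; $\tau\in\mathcal H$ has $A_\tau>0$ with $-B_\tau/A_\tau$ the left endpoint of $I$; $\mathcal L=\{j:\gamma_{\tau j}=0\}$. *)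

theory Defs
  imports "HOL-Analysis.Analysis" "HOL-Library.Extended_Nat"
begin

text \<open>Species are the elements of a finite type 's (s = CARD('s)), reactions the
elements of a finite type 'r (m = CARD('r)).  alpha i j, beta i j are the
stoichiometric coefficients of species i in the reactant/product of reaction j.\<close>

definition stoich_mat :: "('s::finite \<Rightarrow> 'r::finite \<Rightarrow> nat) \<Rightarrow> ('s \<Rightarrow> 'r \<Rightarrow> nat) \<Rightarrow> real^'r^'s" where
  "stoich_mat \<alpha> \<beta> = (\<chi> i j. real (\<beta> i j) - real (\<alpha> i j))"

definition stoich_space :: "('s::finite \<Rightarrow> 'r::finite \<Rightarrow> nat) \<Rightarrow> ('s \<Rightarrow> 'r \<Rightarrow> nat) \<Rightarrow> (real^'s) set" where
  "stoich_space \<alpha> \<beta> = range (\<lambda>v. stoich_mat \<alpha> \<beta> *v v)"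

definition reaction_network :: "('s::finite \<Rightarrow> 'r::finite \<Rightarrow> nat) \<Rightarrow> ('s \<Rightarrow> 'r \<Rightarrow> nat) \<Rightarrow> bool" where
  "reaction_network \<alpha> \<beta> \<longleftrightarrow> (\<forall>j. (\<lambda>i. \<alpha> i j) \<noteq> (\<lambda>i. \<beta> i j))"

definition rate_vec :: "('s::finite \<Rightarrow> 'r::finite \<Rightarrow> nat) \<Rightarrow> real^'r \<Rightarrow> real^'s \<Rightarrow> real^'r" where
  "rate_vec \<alpha> \<kappa> x = (\<chi> j. \<kappa>$j * (\<Prod>i\<in>UNIV. (x$i) ^ (\<alpha> i j)))"

definition ma_field :: "('s::finite \<Rightarrow> 'r::finite \<Rightarrow> nat) \<Rightarrow> ('s \<Rightarrow> 'r \<Rightarrow> nat) \<Rightarrow> real^'r \<Rightarrow> real^'s \<Rightarrow> real^'s" where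
  "ma_field \<alpha> \<beta> \<kappa> x = stoich_mat \<alpha> \<beta> *v rate_vec \<alpha> \<kappa> x"

text \<open>Stoichiometric compatibility class P_c; sp1 is species 1, rc1 reaction 1.
 c i (for i \<noteq> sp1) plays the role of the component c_{i-1}.\<close>
definition compat_class :: "('s::finite \<Rightarrow> 'r::finite \<Rightarrow> nat) \<Rightarrow> ('s \<Rightarrow> 'r \<Rightarrow> nat) \<Rightarrow> 's \<Rightarrow> 'r \<Rightarrow> ('s \<Rightarrow> real) \<Rightarrow> (real^'s) set" where
  "compat_class \<alpha> \<beta> sp1 rc1 c = {x. (\<forall>i. 0 \<le> x$i) \<and>
     (\<forall>i. i \<noteq> sp1 \<longrightarrow> stoich_mat \<alpha> \<beta> $ i $ rc1 * x$sp1 - stoich_mat \<alpha> \<beta> $ sp1 $ rc1 * x$i = c i)}"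

definition pos_steady_states :: "('s::finite \<Rightarrow> 'r::finite \<Rightarrow> nat) \<Rightarrow> ('s \<Rightarrow> 'r \<Rightarrow> nat) \<Rightarrow> 's \<Rightarrow> 'r \<Rightarrow> real^'r \<Rightarrow> ('s \<Rightarrow> real) \<Rightarrow> (real^'s) set" where
  "pos_steady_states \<alpha> \<beta> sp1 rc1 \<kappa> c = {x \<in> compat_class \<alpha> \<beta> sp1 rc1 c. (\<forall>i. 0 < x$i) \<and> ma_field \<alpha> \<beta> \<kappa> x = 0}"

definition ss_count :: "('s::finite \<Rightarrow> 'r::finite \<Rightarrow> nat) \<Rightarrow> ('s \<Rightarrow> 'r \<Rightarrow> nat) \<Rightarrow> 's \<Rightarrow> 'r \<Rightarrow> real^'r \<Rightarrow> ('s \<Rightarrow> real) \<Rightarrow> enat" where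
  "ss_count \<alpha> \<beta> sp1 rc1 \<kappa> c = (let X = pos_steady_states \<alpha> \<beta> sp1 rc1 \<kappa> c in
     if finite X then enat (card X) else \<infinity>)"

definition cap_pos :: "('s::finite \<Rightarrow> 'r::finite \<Rightarrow> nat) \<Rightarrow> ('s \<Rightarrow> 'r \<Rightarrow> nat) \<Rightarrow> 's \<Rightarrow> 'r \<Rightarrow> enat" where
  "cap_pos \<alpha> \<beta> sp1 rc1 = (SUP p \<in> {(\<kappa>, c). \<forall>j. 0 < \<kappa>$j}. ss_count \<alpha> \<beta> sp1 rc1 (fst p) (snd p))"

definition ma_jac :: "('s::finite \<Rightarrow> 'r::finite \<Rightarrow> nat) \<Rightarrow> ('s \<Rightarrow> 'r \<Rightarrow> nat) \<Rightarrow> real^'r \<Rightarrow> real^'s \<Rightarrow> real^'s^'s" where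
  "ma_jac \<alpha> \<beta> \<kappa> x = jacobian (ma_field \<alpha> \<beta> \<kappa>) (at x)"

definition nondegenerate :: "('s::finite \<Rightarrow> 'r::finite \<Rightarrow> nat) \<Rightarrow> ('s \<Rightarrow> 'r \<Rightarrow> nat) \<Rightarrow> real^'r \<Rightarrow> real^'s \<Rightarrow> bool" where
  "nondegenerate \<alpha> \<beta> \<kappa> x \<longleftrightarrow>
     (\<lambda>v. ma_jac \<alpha> \<beta> \<kappa> x *v v) ` stoich_space \<alpha> \<beta> = stoich_space \<alpha> \<beta>"

definition real_mat_eigenvalue :: "real^'n^'n \<Rightarrow> complex \<Rightarrow> bool" where
  "real_mat_eigenvalue M z \<longleftrightarrow>
     (\<exists>v::complex^'n. v \<noteq> 0 \<and> (\<chi> i j. complex_of_real (M$i$j)) *v v = z *s v)"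

definition stable_ss :: "('s::finite \<Rightarrow> 'r::finite \<Rightarrow> nat) \<Rightarrow> ('s \<Rightarrow> 'r \<Rightarrow> nat) \<Rightarrow> real^'r \<Rightarrow> real^'s \<Rightarrow> bool" where
  "stable_ss \<alpha> \<beta> \<kappa> x \<longleftrightarrow> nondegenerate \<alpha> \<beta> \<kappa> x \<and>
     (\<forall>z. real_mat_eigenvalue (ma_jac \<alpha> \<beta> \<kappa> x) z \<and> z \<noteq> 0 \<longrightarrow> Re z < 0)"

definition coefA :: "('s::finite \<Rightarrow> 'r::finite \<Rightarrow> nat) \<Rightarrow> ('s \<Rightarrow> 'r \<Rightarrow> nat) \<Rightarrow> 's \<Rightarrow> 'r \<Rightarrow> 's \<Rightarrow> real" where
  "coefA \<alpha> \<beta> sp1 rc1 i = (if i = sp1 then 1 else stoich_mat \<alpha> \<beta> $ i $ rc1 / stoich_mat \<alpha> \<beta> $ sp1 $ rc1)"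

definition coefB :: "('s::finite \<Rightarrow> 'r::finite \<Rightarrow> nat) \<Rightarrow> ('s \<Rightarrow> 'r \<Rightarrow> nat) \<Rightarrow> 's \<Rightarrow> 'r \<Rightarrow> ('s \<Rightarrow> real) \<Rightarrow> 's \<Rightarrow> real" where
  "coefB \<alpha> \<beta> sp1 rc1 c i = (if i = sp1 then 0 else - c i / stoich_mat \<alpha> \<beta> $ sp1 $ rc1)"

definition species_class :: "('s \<Rightarrow> real) \<Rightarrow> ('s \<Rightarrow> real) \<Rightarrow> 's \<Rightarrow> 's set" where
  "species_class A B i = (if A i \<noteq> 0 then {k. A k \<noteq> 0 \<and> B k / A k = B i / A i} else {k. A k = 0})"

definition phi_class :: "('s::finite \<Rightarrow> 'r::finite \<Rightarrow> nat) \<Rightarrow> ('s \<Rightarrow> real) \<Rightarrow> ('s \<Rightarrow> real) \<Rightarrow> 's \<Rightarrow> nat" where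
  "phi_class \<alpha> A B k = Min (range (\<lambda>j. \<Sum>i\<in>species_class A B k. \<alpha> i j))"

definition gamma_class :: "('s::finite \<Rightarrow> 'r::finite \<Rightarrow> nat) \<Rightarrow> ('s \<Rightarrow> real) \<Rightarrow> ('s \<Rightarrow> real) \<Rightarrow> 's \<Rightarrow> 'r \<Rightarrow> nat" where
  "gamma_class \<alpha> A B k j = (\<Sum>i\<in>species_class A B k. \<alpha> i j) - phi_class \<alpha> A B k"

definition setJ :: "('s \<Rightarrow> real) \<Rightarrow> 's set" where
  "setJ A = {i. A i \<noteq> 0}"

definition representatives :: "('s \<Rightarrow> real) \<Rightarrow> ('s \<Rightarrow> real) \<Rightarrow> 's set \<Rightarrow> bool" where
  "representatives A B R \<longleftrightarrow> (\<forall>i. \<exists>k\<in>R. i \<in> species_class A B k) \<and>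
     (\<forall>k\<in>R. \<forall>k'\<in>R. species_class A B k = species_class A B k' \<longrightarrow> k = k')"

definition setH :: "('s::finite \<Rightarrow> 'r::finite \<Rightarrow> nat) \<Rightarrow> ('s \<Rightarrow> real) \<Rightarrow> ('s \<Rightarrow> real) \<Rightarrow> 's set \<Rightarrow> 's set" where
  "setH \<alpha> A B R = {k \<in> R \<inter> setJ A. \<not> (\<forall>j j'. gamma_class \<alpha> A B k j = gamma_class \<alpha> A B k j')}"

definition interval_I :: "('s \<Rightarrow> real) \<Rightarrow> ('s \<Rightarrow> real) \<Rightarrow> 's \<Rightarrow> real set" where
  "interval_I A B i = (if A i > 0 then {- B i / A i <..}
                       else if A i = 0 then {0 <..} else {0 <..< - B i / A i})"

definition setL :: "('s::finite \<Rightarrow> 'r::finite \<Rightarrow> nat) \<Rightarrow> ('s \<Rightarrow> real) \<Rightarrow> ('s \<Rightarrow> real) \<Rightarrow> 's \<Rightarrow> 'r set" where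
  "setL \<alpha> A B \<tau> = {j. gamma_class \<alpha> A B \<tau> j = 0}"

end

theory Submission
  imports Defs
begin


lemma no_zero_same_sign:
  fixes g :: "real \<Rightarrow> real"
  assumes "continuous_on {p..q} g" "p \<le> q" "\<forall>t\<in>{p..q}. g t \<noteq> 0"
  shows "g p > 0 \<longleftrightarrow> g q > 0"
proof
  assume "g p > 0"
  show "g q > 0"
  proof (rule ccontr)
    assume "\<not> g q > 0"
    then have "g q \<le> 0" by simp
    from IVT2'[of g q 0 p, OF this] \<open>g p > 0\<close> assms obtain x where "x \<ge> p" "x \<le> q" "g x = 0" by force
    with assms show False by auto
  qed
next
  assume "g q > 0"
  show "g p > 0"
  proof (rule ccontr)
    assume "\<not> g p > 0"
    then have "g p \<le> 0" by simp
    from IVT'[of g p 0 q, OF this] \<open>g q > 0\<close> assms obtain x where "x \<ge> p" "x \<le> q" "g x = 0" by force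
    with assms show False by auto
  qed
qed

lemma alt_roots:
  fixes f :: "real \<Rightarrow> real" and z :: "nat \<Rightarrow> real"
  assumes "\<forall>i<M. z i < z (Suc i)" "continuous_on {z 0..z M} f" "\<forall>i<M. f (z i) * f (z (Suc i)) < 0"
  shows "\<exists>S. finite S \<and> card S = M \<and> S \<subseteq> {t. z 0 < t \<and> t < z M \<and> f t = 0}"
  using assms
proof (induction M)
  case 0
  then show ?case by auto
next
  case (Suc M)
  have mono: "z 0 \<le> z M"
  proof -
    have "\<forall>i\<le>M. z 0 \<le> z i"
    proof (intro allI impI)
      fix i assume "i \<le> M" then show "z 0 \<le> z i"
        using Suc.prems(1) proof (induction i)
        case (Suc i)
        have "i < Suc M" using Suc.prems(1) by simp
        then have "z i < z (Suc i)" using Suc.prems(2) by blast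
        moreover have "z 0 \<le> z i" using Suc by simp
        ultimately show ?case by simp
      qed simp
    qed
    then show ?thesis by simp
  qed
  have lt: "z M < z (Suc M)" using Suc.prems(1) by simp
  have c1: "continuous_on {z 0..z M} f"
    using Suc.prems(2) by (rule continuous_on_subset) (use lt in auto)
  obtain S where S: "finite S" "card S = M" "S \<subseteq> {t. z 0 < t \<and> t < z M \<and> f t = 0}"
    using Suc.IH[OF _ c1] Suc.prems by auto
  have c2: "continuous_on {z M..z (Suc M)} f"
    using Suc.prems(2) by (rule continuous_on_subset) (use mono in auto)
  have pr: "f (z M) * f (z (Suc M)) < 0" using Suc.prems(3) by simp
  have "\<exists>r. z M < r \<and> r < z (Suc M) \<and> f r = 0"
  proof (cases "f (z M) < 0")
    case True
    then have "f (z (Suc M)) > 0" using pr by (simp add: mult_less_0_iff)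
    from IVT'[of f "z M" 0 "z (Suc M)"] True this lt c2 obtain x where "x \<ge> z M" "x \<le> z (Suc M)" "f x = 0" by force
    then show ?thesis using True \<open>f (z (Suc M)) > 0\<close> by (metis less_eq_real_def less_irrefl)
  next
    case False
    then have "f (z M) > 0" "f (z (Suc M)) < 0" using pr by (auto simp: mult_less_0_iff)
    from IVT2'[of f "z (Suc M)" 0 "z M"] this lt c2 obtain x where "x \<ge> z M" "x \<le> z (Suc M)" "f x = 0" by force
    then show ?thesis using \<open>f (z M) > 0\<close> \<open>f (z (Suc M)) < 0\<close> by (metis less_eq_real_def less_irrefl)
  qed
  then obtain r where r: "z M < r" "r < z (Suc M)" "f r = 0" by blast
  have "r \<notin> S" using S(3) r by auto
  then show ?case using S r mono lt
    by (intro exI[of _ "insert r S"]) auto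
qed



lemma sign_count:
  fixes g g' :: "real \<Rightarrow> real"
  assumes "finite Z" "\<forall>z\<in>Z. p < z \<and> z < q" "continuous_on {p..q} g"
    "\<forall>t\<in>{p..q}. g t = 0 \<longleftrightarrow> t \<in> Z"
    "\<forall>z\<in>Z. (g has_real_derivative g' z) (at z) \<and> g' z \<noteq> 0" "p \<le> q"
  shows "int (card {z\<in>Z. g' z < 0}) - int (card {z\<in>Z. 0 < g' z})
          = (if g p > 0 then 1 else 0) - (if g q > 0 then 1 else 0)"
  using assms
proof (induction "card Z" arbitrary: Z p rule: less_induct)
  case less
  show ?case
  proof (cases "Z = {}")
    case True
    then have "g p > 0 \<longleftrightarrow> g q > 0"
      using no_zero_same_sign[of p q g] less.prems by auto
    then show ?thesis using True by simp
  next
    case False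
    define z where "z = Min Z"
    have zZ: "z \<in> Z" using False less.prems(1) z_def by simp
    have zmin: "\<forall>y\<in>Z. z \<le> y" using less.prems(1) z_def by simp
    define Z' where "Z' = Z - {z}"
    define q1 where "q1 = (if Z' = {} then q else Min Z')"
    have finZ': "finite Z'" using less.prems(1) Z'_def by simp
    have zq1: "z < q1"
    proof (cases "Z' = {}")
      case True then show ?thesis using q1_def zZ less.prems(2) by simp
    next
      case False
      then have "Min Z' \<in> Z'" using finZ' by simp
      then show ?thesis using q1_def False zmin Z'_def by force
    qed
    have q1le: "\<forall>y\<in>Z'. q1 \<le> y" using q1_def finZ' by auto
    have q1q: "q1 \<le> q"
    proof (cases "Z' = {}")
      case True then show ?thesis using q1_def by simp
    next
      case False
      then have "Min Z' \<in> Z'" using finZ' by simp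
      then show ?thesis using q1_def False less.prems(2) Z'_def by force
    qed
    have pz: "p < z" and zq: "z < q" using zZ less.prems(2) by auto
    have gz: "g z = 0" using less.prems(4) zZ pz zq by auto
    have der: "(g has_real_derivative g' z) (at z)" "g' z \<noteq> 0" using less.prems(5) zZ by auto
    obtain d where d: "d > 0" "\<forall>h>0. h < d \<longrightarrow> (if g' z > 0 then g (z - h) < 0 \<and> g (z + h) > 0
          else g (z - h) > 0 \<and> g (z + h) < 0)"
    proof (cases "g' z > 0")
      case True
      obtain d1 where d1: "d1 > 0" "\<forall>h>0. h < d1 \<longrightarrow> g z < g (z + h)"
        using DERIV_pos_inc_right[OF der(1) True] by blast
      obtain d2 where d2: "d2 > 0" "\<forall>h>0. h < d2 \<longrightarrow> g (z - h) < g z"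
        using DERIV_pos_inc_left[OF der(1) True] by blast
      show ?thesis using that[of "min d1 d2"] d1 d2 True gz by auto
    next
      case False
      then have neg: "g' z < 0" using der(2) by simp
      obtain d1 where d1: "d1 > 0" "\<forall>h>0. h < d1 \<longrightarrow> g z > g (z + h)"
        using DERIV_neg_dec_right[OF der(1) neg] by blast
      obtain d2 where d2: "d2 > 0" "\<forall>h>0. h < d2 \<longrightarrow> g (z - h) > g z"
        using DERIV_neg_dec_left[OF der(1) neg] by blast
      show ?thesis using that[of "min d1 d2"] d1 d2 False gz by auto
    qed
    define h where "h = min d (min (z - p) (q1 - z)) / 2"
    have h: "h > 0" "h < d" "h < z - p" "h < q1 - z"
      using d pz zq1 unfolding h_def by auto
    have sgn: "if g' z > 0 then g (z - h) < 0 \<and> g (z + h) > 0 else g (z - h) > 0 \<and> g (z + h) < 0"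
      using d h by blast
    have cp: "continuous_on {p..z-h} g"
      using less.prems(3) by (rule continuous_on_subset) (use h zq in auto)
    have nz: "\<forall>t\<in>{p..z-h}. g t \<noteq> 0"
    proof
      fix t assume t: "t \<in> {p..z-h}"
      then have "t \<le> q" using h zq by auto
      moreover have "t \<notin> Z" using zmin t h by force
      ultimately show "g t \<noteq> 0" using less.prems(4) t by auto
    qed
    have sp: "g p > 0 \<longleftrightarrow> g (z - h) > 0"
      using no_zero_same_sign[OF cp _ nz] h by simp
    have cardlt: "card Z' < card Z" using zZ less.prems(1) Z'_def by (metis card_Diff1_less)
    have IH: "int (card {y\<in>Z'. g' y < 0}) - int (card {y\<in>Z'. 0 < g' y})
          = (if g (z+h) > 0 then 1 else 0) - (if g q > 0 then 1 else 0)"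
    proof (rule less.hyps[OF cardlt finZ'])
      show "\<forall>y\<in>Z'. z + h < y \<and> y < q" using q1le h less.prems(2) Z'_def by force
      show "continuous_on {z+h..q} g"
        using less.prems(3) by (rule continuous_on_subset) (use h pz in auto)
      show "\<forall>t\<in>{z+h..q}. g t = 0 \<longleftrightarrow> t \<in> Z'"
        using less.prems(4) h pz Z'_def by auto
      show "\<forall>y\<in>Z'. (g has_real_derivative g' y) (at y) \<and> g' y \<noteq> 0"
        using less.prems(5) Z'_def by auto
      show "z + h \<le> q" using h q1q by simp
    qed
    have Zs: "Z = insert z Z'" using zZ Z'_def by auto
    have zn: "z \<notin> Z'" using Z'_def by simp
    show ?thesis
    proof (cases "g' z > 0")
      case True
      have c1: "{y\<in>Z. g' y < 0} = {y\<in>Z'. g' y < 0}" using Zs True by auto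
      have c2: "{y\<in>Z. 0 < g' y} = insert z {y\<in>Z'. 0 < g' y}" using Zs True by auto
      have "card {y\<in>Z. 0 < g' y} = Suc (card {y\<in>Z'. 0 < g' y})"
        unfolding c2 using finZ' zn by simp
      then show ?thesis using IH c1 sgn True sp by simp
    next
      case False
      then have neg: "g' z < 0" using der(2) by simp
      have c1: "{y\<in>Z. g' y < 0} = insert z {y\<in>Z'. g' y < 0}" using Zs neg by auto
      have c2: "{y\<in>Z. 0 < g' y} = {y\<in>Z'. 0 < g' y}" using Zs neg by auto
      have "card {y\<in>Z. g' y < 0} = Suc (card {y\<in>Z'. g' y < 0})"
        unfolding c1 using finZ' zn by simp
      then show ?thesis using IH c2 sgn False sp by simp
    qed
  qed
qed

lemma pert_sign:
  fixes h \<delta> :: real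
  assumes "\<bar>\<delta>\<bar> < \<bar>h\<bar>"
  shows "0 < (h + \<delta>) * h"
proof (cases "h > 0")
  case True
  then have "h + \<delta> > 0" using assms by (auto simp: abs_less_iff)
  then show ?thesis using True by simp
next
  case False
  then have "h < 0" using assms by (cases "h = 0") auto
  moreover then have "h + \<delta> < 0" using assms by (auto simp: abs_less_iff)
  ultimately show ?thesis by (simp add: mult_neg_neg)
qed

lemma sign_trans:
  fixes x y x' y' :: real
  assumes "x * y < 0" "0 < x' * x" "0 < y' * y"
  shows "x' * y' < 0"
  using assms by (auto simp: mult_less_0_iff zero_less_mult_iff)



definition Fk :: "('s::finite \<Rightarrow> 'r::finite \<Rightarrow> nat) \<Rightarrow> ('s \<Rightarrow> 'r \<Rightarrow> nat) \<Rightarrow> 's \<Rightarrow> real^'r \<Rightarrow> real^'s \<Rightarrow> real" where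
  "Fk \<alpha> \<beta> sp1 \<kappa> y = (\<Sum>j\<in>UNIV. stoich_mat \<alpha> \<beta> $ sp1 $ j * \<kappa>$j * (\<Prod>i\<in>UNIV. (y$i) ^ \<alpha> i j))"

definition Avec :: "('s::finite \<Rightarrow> 'r::finite \<Rightarrow> nat) \<Rightarrow> ('s \<Rightarrow> 'r \<Rightarrow> nat) \<Rightarrow> 's \<Rightarrow> 'r \<Rightarrow> real^'s" where
  "Avec \<alpha> \<beta> sp1 rc1 = (\<chi> i. coefA \<alpha> \<beta> sp1 rc1 i)"

lemma diff_prod_at:
  fixes f :: "'i \<Rightarrow> 'a::real_normed_vector \<Rightarrow> real"
  assumes "\<forall>i\<in>I. f i differentiable (at x)"
  shows "(\<lambda>x. \<Prod>i\<in>I. f i x) differentiable (at x)"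
proof -
  from bchoice[OF assms[unfolded differentiable_def]] obtain f' where
    "\<forall>i\<in>I. (f i has_derivative f' i) (at x)" by blast
  then show ?thesis unfolding differentiable_def
    by (intro exI[of _ "\<lambda>y. \<Sum>i\<in>I. f' i y * (\<Prod>j\<in>I - {i}. f j x)"] has_derivative_prod) auto
qed

locale net =
  fixes \<alpha> \<beta> :: "'s::finite \<Rightarrow> 'r::finite \<Rightarrow> nat" and sp1 :: 's and rc1 :: 'r
  assumes one_dim: "dim (stoich_space \<alpha> \<beta>) = 1"
    and label1: "stoich_mat \<alpha> \<beta> $ sp1 $ rc1 \<noteq> 0"
begin

abbreviation "nM \<equiv> stoich_mat \<alpha> \<beta>"
abbreviation "nA \<equiv> coefA \<alpha> \<beta> sp1 rc1"
abbreviation "nAv \<equiv> Avec \<alpha> \<beta> sp1 rc1"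
abbreviation "nF \<equiv> Fk \<alpha> \<beta> sp1"

lemma A_sp1: "nA sp1 = 1" by (simp add: coefA_def)

lemma Av_nz: "nAv \<noteq> 0"
proof
  assume "nAv = 0"
  then have "nAv $ sp1 = 0" by simp
  then show False by (simp add: Avec_def A_sp1)
qed

lemma col_in_S: "column j nM \<in> stoich_space \<alpha> \<beta>"
  unfolding stoich_space_def by (metis matrix_vector_mult_basis rangeI)

lemma col_prop: "nM $ i $ j = nA i * nM $ sp1 $ j"
proof -
  let ?S = "stoich_space \<alpha> \<beta>"
  define u where "u = column rc1 nM"
  have uS: "u \<in> ?S" using col_in_S u_def by simp
  have unz: "u \<noteq> 0"
  proof
    assume "u = 0" then have "u $ sp1 = 0" by simp
    then show False using label1 by (simp add: u_def column_def)
  qed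
  have d1: "dim {u} = 1" using unz by (simp add: dim_insert)
  have "span {u} = span ?S" using dim_eq_span[of "{u}" ?S] uS d1 one_dim by simp
  then have "column j nM \<in> span {u}" using col_in_S span_superset by blast
  then obtain k where k: "column j nM = k *\<^sub>R u" by (auto simp: span_singleton)
  have e1: "nM $ i $ j = k * nM $ i $ rc1" using arg_cong[OF k, of "\<lambda>v. v $ i"]
    by (simp add: column_def u_def)
  have e2: "nM $ sp1 $ j = k * nM $ sp1 $ rc1" using arg_cong[OF k, of "\<lambda>v. v $ sp1"]
    by (simp add: column_def u_def)
  show ?thesis
  proof (cases "i = sp1")
    case True then show ?thesis by (simp add: A_sp1)
  next
    case False
    then show ?thesis using e1 e2 label1 by (simp add: coefA_def field_simps)
  qed
qed

lemma field_eq: "ma_field \<alpha> \<beta> \<kappa> = (\<lambda>y. nF \<kappa> y *\<^sub>R nAv)"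
proof (rule ext)
  fix y
  show "ma_field \<alpha> \<beta> \<kappa> y = nF \<kappa> y *\<^sub>R nAv"
    unfolding vec_eq_iff
  proof
    fix i
    have "ma_field \<alpha> \<beta> \<kappa> y $ i = (\<Sum>j\<in>UNIV. nM $ i $ j * (\<kappa>$j * (\<Prod>i\<in>UNIV. (y$i) ^ \<alpha> i j)))"
      by (simp add: ma_field_def rate_vec_def matrix_vector_mult_def)
    also have "\<dots> = (\<Sum>j\<in>UNIV. nA i * (nM $ sp1 $ j * \<kappa>$j * (\<Prod>i\<in>UNIV. (y$i) ^ \<alpha> i j)))"
      by (intro sum.cong refl) (subst col_prop[of i], simp add: mult_ac)
    also have "\<dots> = nA i * nF \<kappa> y"
      by (simp add: Fk_def sum_distrib_left)
    finally show "ma_field \<alpha> \<beta> \<kappa> y $ i = (nF \<kappa> y *\<^sub>R nAv) $ i"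
      by (simp add: Avec_def mult.commute)
  qed
qed

lemma S_eq: "stoich_space \<alpha> \<beta> = range (\<lambda>s. s *\<^sub>R nAv)"
proof
  show "stoich_space \<alpha> \<beta> \<subseteq> range (\<lambda>s. s *\<^sub>R nAv)"
  proof
    fix w assume "w \<in> stoich_space \<alpha> \<beta>"
    then obtain v where v: "w = nM *v v" by (auto simp: stoich_space_def)
    have "w = (\<Sum>j\<in>UNIV. nM $ sp1 $ j * v $ j) *\<^sub>R nAv"
      unfolding v vec_eq_iff
    proof
      fix i
      have "(nM *v v) $ i = (\<Sum>j\<in>UNIV. nM $ i $ j * v $ j)" by (simp add: matrix_vector_mult_def)
      also have "\<dots> = (\<Sum>j\<in>UNIV. nA i * (nM $ sp1 $ j * v $ j))"
        by (intro sum.cong refl) (subst col_prop[of i], simp add: mult_ac)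
      finally show "(nM *v v) $ i = ((\<Sum>j\<in>UNIV. nM $ sp1 $ j * v $ j) *\<^sub>R nAv) $ i"
        by (simp add: Avec_def sum_distrib_left[symmetric] mult.commute)
    qed
    then show "w \<in> range (\<lambda>s. s *\<^sub>R nAv)" by blast
  qed
next
  show "range (\<lambda>s. s *\<^sub>R nAv) \<subseteq> stoich_space \<alpha> \<beta>"
  proof
    fix w assume "w \<in> range (\<lambda>s. s *\<^sub>R nAv)"
    then obtain s where s: "w = s *\<^sub>R nAv" by blast
    have "w = nM *v axis rc1 (s / nM $ sp1 $ rc1)"
      unfolding s vec_eq_iff
    proof
      fix i
      have "(nM *v axis rc1 (s / nM $ sp1 $ rc1)) $ i = nM $ i $ rc1 * (s / nM $ sp1 $ rc1)"
        by (simp add: matrix_vector_mult_def axis_def if_distrib cong: if_cong)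
      then show "(s *\<^sub>R nAv) $ i = (nM *v axis rc1 (s / nM $ sp1 $ rc1)) $ i"
        using label1 col_prop[of i rc1] by (simp add: Avec_def)
    qed
    then show "w \<in> stoich_space \<alpha> \<beta>" unfolding stoich_space_def by blast
  qed
qed

lemma F_diff: "nF \<kappa> differentiable (at y)"
proof -
  have "(\<lambda>y::real^'s. (y$i)^\<alpha> i j) differentiable (at y)" for i j
    by (intro differentiable_power bounded_linear_imp_differentiable bounded_linear_vec_nth)
  then have "(\<lambda>y::real^'s. \<Prod>i\<in>UNIV. (y$i)^\<alpha> i j) differentiable (at y)" for j
    by (intro diff_prod_at) auto
  then have "(\<lambda>y::real^'s. nM $ sp1 $ j * \<kappa>$j * (\<Prod>i\<in>UNIV. (y$i)^\<alpha> i j)) differentiable (at y)" for j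
    by (intro differentiable_mult differentiable_const) auto
  then show ?thesis unfolding Fk_def by (intro differentiable_sum) auto
qed

definition "Fd \<kappa> y = frechet_derivative (nF \<kappa>) (at y)"

lemma F_has_der: "(nF \<kappa> has_derivative Fd \<kappa> y) (at y)"
  unfolding Fd_def using F_diff frechet_derivative_works by blast

lemma Fd_linear: "linear (Fd \<kappa> y)"
  using F_has_der has_derivative_linear by blast

lemma field_has_der: "(ma_field \<alpha> \<beta> \<kappa> has_derivative (\<lambda>h. Fd \<kappa> y h *\<^sub>R nAv)) (at y)"
  unfolding field_eq by (intro has_derivative_scaleR_left F_has_der)

lemma jac_mult: "ma_jac \<alpha> \<beta> \<kappa> y *v h = Fd \<kappa> y h *\<^sub>R nAv"
proof -
  have d: "ma_field \<alpha> \<beta> \<kappa> differentiable (at y)"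
    using field_has_der differentiable_def by blast
  then have "(ma_field \<alpha> \<beta> \<kappa> has_derivative (\<lambda>h. ma_jac \<alpha> \<beta> \<kappa> y *v h)) (at y)"
    unfolding ma_jac_def using jacobian_works by blast
  from has_derivative_unique[OF this field_has_der] show ?thesis by metis
qed

lemma nondeg_iff: "nondegenerate \<alpha> \<beta> \<kappa> y \<longleftrightarrow> Fd \<kappa> y nAv \<noteq> 0"
proof -
  have lin: "Fd \<kappa> y (s *\<^sub>R nAv) = s * Fd \<kappa> y nAv" for s
    using Fd_linear linear_scale by (metis real_scaleR_def)
  have img: "(\<lambda>v. ma_jac \<alpha> \<beta> \<kappa> y *v v) ` stoich_space \<alpha> \<beta> = range (\<lambda>s. (s * Fd \<kappa> y nAv) *\<^sub>R nAv)"
    unfolding S_eq image_image jac_mult lin by simp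
  show ?thesis
  proof
    assume nd: "nondegenerate \<alpha> \<beta> \<kappa> y"
    show "Fd \<kappa> y nAv \<noteq> 0"
    proof
      assume z: "Fd \<kappa> y nAv = 0"
      have "nAv \<in> stoich_space \<alpha> \<beta>" unfolding S_eq by (metis rangeI scaleR_one)
      then have "nAv \<in> range (\<lambda>s. (s * Fd \<kappa> y nAv) *\<^sub>R nAv)"
        using nd img unfolding nondegenerate_def by simp
      then show False using z Av_nz by auto
    qed
  next
    assume nz: "Fd \<kappa> y nAv \<noteq> 0"
    have "range (\<lambda>s. (s * Fd \<kappa> y nAv) *\<^sub>R nAv) = range (\<lambda>s. s *\<^sub>R nAv)"
    proof (intro equalityI subsetI)
      fix w assume "w \<in> range (\<lambda>s. s *\<^sub>R nAv)"
      then obtain s where "w = s *\<^sub>R nAv" by blast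
      then have "w = ((s / Fd \<kappa> y nAv) * Fd \<kappa> y nAv) *\<^sub>R nAv" using nz by simp
      then show "w \<in> range (\<lambda>s. (s * Fd \<kappa> y nAv) *\<^sub>R nAv)" by blast
    qed auto
    then show "nondegenerate \<alpha> \<beta> \<kappa> y" unfolding nondegenerate_def using img S_eq by metis
  qed
qed

lemma Fd_expand: "Fd \<kappa> y v = (\<Sum>k\<in>UNIV. v$k * Fd \<kappa> y (axis k 1))"
proof -
  have "v = (\<Sum>k\<in>UNIV. v$k *\<^sub>R axis k 1)"
    using basis_expansion[of v] by (simp add: scalar_mult_eq_scaleR)
  then have "Fd \<kappa> y v = Fd \<kappa> y (\<Sum>k\<in>UNIV. v$k *\<^sub>R axis k 1)" by simp
  also have "\<dots> = (\<Sum>k\<in>UNIV. v$k * Fd \<kappa> y (axis k 1))"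
    using Fd_linear by (simp add: linear_sum linear_scale)
  finally show ?thesis .
qed

lemma jac_entry: "ma_jac \<alpha> \<beta> \<kappa> y $ i $ k = Fd \<kappa> y (axis k 1) * nA i"
proof -
  have "ma_jac \<alpha> \<beta> \<kappa> y $ i $ k = (ma_jac \<alpha> \<beta> \<kappa> y *v axis k 1) $ i"
    by (simp add: matrix_vector_mult_basis column_def)
  also have "\<dots> = Fd \<kappa> y (axis k 1) * nA i" by (simp add: jac_mult Avec_def)
  finally show ?thesis .
qed

lemma eig_real:
  assumes "real_mat_eigenvalue (ma_jac \<alpha> \<beta> \<kappa> y) z" "z \<noteq> 0"
  shows "z = complex_of_real (Fd \<kappa> y nAv)"
proof -
  obtain v :: "complex^'s" where v: "v \<noteq> 0"
    "(\<chi> i j. complex_of_real (ma_jac \<alpha> \<beta> \<kappa> y $ i $ j)) *v v = z *s v"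
    using assms(1) unfolding real_mat_eigenvalue_def by blast
  define w where "w k = Fd \<kappa> y (axis k 1)" for k
  define \<sigma> where "\<sigma> = (\<Sum>k\<in>UNIV. complex_of_real (w k) * v$k)"
  have eq: "complex_of_real (nA i) * \<sigma> = z * v$i" for i
  proof -
    have "z * v$i = ((\<chi> i j. complex_of_real (ma_jac \<alpha> \<beta> \<kappa> y $ i $ j)) *v v) $ i"
      using v(2) by simp
    also have "\<dots> = (\<Sum>k\<in>UNIV. complex_of_real (w k * nA i) * v$k)"
      by (simp add: matrix_vector_mult_def jac_entry w_def)
    also have "\<dots> = complex_of_real (nA i) * \<sigma>"
      by (simp add: \<sigma>_def sum_distrib_left mult_ac)
    finally show ?thesis by simp
  qed
  have snz: "\<sigma> \<noteq> 0"
  proof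
    assume "\<sigma> = 0"
    then have "z * v$i = 0" for i using eq[of i] by simp
    then have "v = 0" using assms(2) by (simp add: vec_eq_iff)
    then show False using v(1) by simp
  qed
  have "\<sigma> * z = (\<Sum>k\<in>UNIV. complex_of_real (w k) * (z * v$k))"
    by (simp add: \<sigma>_def sum_distrib_left sum_distrib_right mult_ac)
  also have "\<dots> = (\<Sum>k\<in>UNIV. complex_of_real (w k) * (complex_of_real (nA k) * \<sigma>))"
    by (simp add: eq)
  also have "\<dots> = \<sigma> * complex_of_real (\<Sum>k\<in>UNIV. nA k * w k)"
    by (simp add: sum_distrib_left mult_ac)
  also have "(\<Sum>k\<in>UNIV. nA k * w k) = Fd \<kappa> y nAv"
    by (simp only: Fd_expand[of \<kappa> y nAv], simp add: w_def Avec_def)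
  finally show ?thesis using snz by simp
qed

lemma eig_exists:
  "real_mat_eigenvalue (ma_jac \<alpha> \<beta> \<kappa> y) (complex_of_real (Fd \<kappa> y nAv))"
proof -
  define v :: "complex^'s" where "v = (\<chi> i. complex_of_real (nA i))"
  have "v \<noteq> 0"
  proof
    assume "v = 0" then have "v $ sp1 = 0" by simp
    then show False by (simp add: v_def A_sp1)
  qed
  moreover have "(\<chi> i j. complex_of_real (ma_jac \<alpha> \<beta> \<kappa> y $ i $ j)) *v v
      = complex_of_real (Fd \<kappa> y nAv) *s v"
    unfolding vec_eq_iff
  proof
    fix i
    have "((\<chi> i j. complex_of_real (ma_jac \<alpha> \<beta> \<kappa> y $ i $ j)) *v v) $ i
        = (\<Sum>k\<in>UNIV. complex_of_real (Fd \<kappa> y (axis k 1) * nA i) * complex_of_real (nA k))"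
      by (simp add: matrix_vector_mult_def jac_entry v_def)
    also have "\<dots> = complex_of_real (nA i * (\<Sum>k\<in>UNIV. nA k * Fd \<kappa> y (axis k 1)))"
      by (simp add: sum_distrib_left mult_ac)
    also have "(\<Sum>k\<in>UNIV. nA k * Fd \<kappa> y (axis k 1)) = Fd \<kappa> y nAv"
      by (simp only: Fd_expand[of \<kappa> y nAv], simp add: Avec_def)
    finally show "((\<chi> i j. complex_of_real (ma_jac \<alpha> \<beta> \<kappa> y $ i $ j)) *v v) $ i
        = (complex_of_real (Fd \<kappa> y nAv) *s v) $ i"
      by (simp add: v_def mult.commute)
  qed
  ultimately show ?thesis unfolding real_mat_eigenvalue_def by blast
qed

lemma stable_iff: "stable_ss \<alpha> \<beta> \<kappa> y \<longleftrightarrow> Fd \<kappa> y nAv < 0"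
proof
  assume st: "stable_ss \<alpha> \<beta> \<kappa> y"
  then have nz: "Fd \<kappa> y nAv \<noteq> 0" by (simp add: stable_ss_def nondeg_iff)
  then have "Re (complex_of_real (Fd \<kappa> y nAv)) < 0"
    using st[unfolded stable_ss_def] eig_exists[of \<kappa> y] nz by auto
  then show "Fd \<kappa> y nAv < 0" by simp
next
  assume neg: "Fd \<kappa> y nAv < 0"
  then have "nondegenerate \<alpha> \<beta> \<kappa> y" by (simp add: nondeg_iff)
  moreover have "Re z < 0" if "real_mat_eigenvalue (ma_jac \<alpha> \<beta> \<kappa> y) z" "z \<noteq> 0" for z
    using eig_real[OF that] neg by simp
  ultimately show "stable_ss \<alpha> \<beta> \<kappa> y" unfolding stable_ss_def by blast
qed

end



theorem corollary7p7:
  fixes \<alpha> \<beta> :: "'s::finite \<Rightarrow> 'r::finite \<Rightarrow> nat"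
    and sp1 :: 's and rc1 :: 'r
    and \<kappa> :: "real^'r" and c :: "'s \<Rightarrow> real"
    and N :: nat and X :: "(real^'s) set"
    and R :: "'s set" and \<tau> :: 's
  defines "A \<equiv> coefA \<alpha> \<beta> sp1 rc1"
    and "B \<equiv> coefB \<alpha> \<beta> sp1 rc1 c"
    and "H \<equiv> setH \<alpha> (coefA \<alpha> \<beta> sp1 rc1) (coefB \<alpha> \<beta> sp1 rc1 c) R"
  assumes network: "reaction_network \<alpha> \<beta>"
    and one_dim: "dim (stoich_space \<alpha> \<beta>) = 1"
    and label1: "stoich_mat \<alpha> \<beta> $ sp1 $ rc1 \<noteq> 0"
    and cap: "cap_pos \<alpha> \<beta> sp1 rc1 = enat (2 * N + 1)"
    and kpos: "\<forall>j. 0 < \<kappa> $ j"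
    and X_ss: "X \<subseteq> pos_steady_states \<alpha> \<beta> sp1 rc1 \<kappa> c"
    and X_card: "card X = 2 * N + 1"
    and X_nondeg: "\<forall>x\<in>X. nondegenerate \<alpha> \<beta> \<kappa> x"
    and reps: "representatives A B R"
    and sp1_H: "sp1 \<in> H"
    and tau_H: "\<tau> \<in> H"
    and tau_pos: "A \<tau> > 0"
    and tau_left: "(\<Inter>k\<in>H. interval_I A B k) \<noteq> {} \<and>
                   Inf (\<Inter>k\<in>H. interval_I A B k) = - B \<tau> / A \<tau>"
  shows "((\<Sum>j\<in>setL \<alpha> A B \<tau>.
            stoich_mat \<alpha> \<beta> $ sp1 $ j * \<kappa> $ j
            * (\<Prod>i\<in>setJ A. \<bar>A i\<bar> ^ \<alpha> i j)
            * (\<Prod>i\<in>UNIV - setJ A. B i ^ \<alpha> i j)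
            * (\<Prod>k\<in>H - {\<tau>}. (B k / \<bar>A k\<bar> - A k / \<bar>A k\<bar> * (B \<tau> / A \<tau>))
                                   ^ gamma_class \<alpha> A B k j)) > 0 \<longrightarrow> card {x \<in> X. stable_ss \<alpha> \<beta> \<kappa> x} = N + 1)
       \<and> (\<not> (\<Sum>j\<in>setL \<alpha> A B \<tau>.
            stoich_mat \<alpha> \<beta> $ sp1 $ j * \<kappa> $ j
            * (\<Prod>i\<in>setJ A. \<bar>A i\<bar> ^ \<alpha> i j)
            * (\<Prod>i\<in>UNIV - setJ A. B i ^ \<alpha> i j)
            * (\<Prod>k\<in>H - {\<tau>}. (B k / \<bar>A k\<bar> - A k / \<bar>A k\<bar> * (B \<tau> / A \<tau>))
                                   ^ gamma_class \<alpha> A B k j)) > 0 \<longrightarrow> card {x \<in> X. stable_ss \<alpha> \<beta> \<kappa> x} = N)"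
proof -
  interpret net \<alpha> \<beta> sp1 rc1 using one_dim label1 by unfold_locales
  define d where "d = stoich_mat \<alpha> \<beta> $ sp1 $ rc1"
  have dnz: "d \<noteq> 0" using label1 d_def by simp
  have Aeq: "A = coefA \<alpha> \<beta> sp1 rc1" using A_def by simp
  have Beq: "B = coefB \<alpha> \<beta> sp1 rc1 c" using B_def by simp
  have Heq: "H = setH \<alpha> A B R" using H_def Aeq Beq by simp
  have A1: "A sp1 = 1" by (simp add: Aeq coefA_def)
  have B1: "B sp1 = 0" by (simp add: Beq coefB_def)
  have Ai: "stoich_mat \<alpha> \<beta> $ i $ rc1 = d * A i" if "i \<noteq> sp1" for i
    using dnz that by (simp add: Aeq coefA_def d_def)
  have Bi: "c i = - d * B i" if "i \<noteq> sp1" for i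
    using dnz that by (simp add: Beq coefB_def d_def)
  have cp: "stoich_mat \<alpha> \<beta> $ i $ j = A i * stoich_mat \<alpha> \<beta> $ sp1 $ j" for i j
    unfolding Aeq by (rule col_prop)
  have Av: "Avec \<alpha> \<beta> sp1 rc1 = (\<chi> i. A i)" by (simp add: Avec_def Aeq)
  define lv where "lv B' t = (\<chi> i. A i * t + B' i)" for B' :: "'s \<Rightarrow> real" and t :: real
  have lv1: "lv B' t $ sp1 = t" if "B' sp1 = 0" for B' t using that A1 by (simp add: lv_def)
  have compat1: "x = lv B (x$sp1)" if "x \<in> compat_class \<alpha> \<beta> sp1 rc1 c" for x
    unfolding vec_eq_iff
  proof
    fix i
    show "x $ i = lv B (x $ sp1) $ i"
    proof (cases "i = sp1")
      case True then show ?thesis by (simp add: lv_def A1 B1)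
    next
      case False
      then have "stoich_mat \<alpha> \<beta> $ i $ rc1 * x$sp1 - stoich_mat \<alpha> \<beta> $ sp1 $ rc1 * x$i = c i"
        using that by (simp add: compat_class_def)
      then have "d * A i * x$sp1 - d * x$i = - d * B i" using Ai[OF False] Bi[OF False] d_def by simp
      then have "d * (x$i - (A i * x$sp1 + B i)) = 0" by (simp add: algebra_simps)
      then show ?thesis using dnz by (simp add: lv_def)
    qed
  qed
  have compat2: "lv B' t \<in> compat_class \<alpha> \<beta> sp1 rc1 (\<lambda>i. - d * B' i)"
    if "\<forall>i. 0 \<le> A i * t + B' i" "B' sp1 = 0" for B' t
    unfolding compat_class_def
  proof (intro CollectI conjI allI impI)
    fix i show "0 \<le> lv B' t $ i" using that by (simp add: lv_def)
  next
    fix i assume "i \<noteq> sp1"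
    then show "stoich_mat \<alpha> \<beta> $ i $ rc1 * lv B' t $ sp1 - stoich_mat \<alpha> \<beta> $ sp1 $ rc1 * lv B' t $ i
        = - d * B' i"
      using Ai lv1[of B' t, OF that(2)] by (simp add: lv_def d_def algebra_simps)
  qed
  have pss_iff: "y \<in> pos_steady_states \<alpha> \<beta> sp1 rc1 \<kappa>' c' \<longleftrightarrow>
      y \<in> compat_class \<alpha> \<beta> sp1 rc1 c' \<and> (\<forall>i. 0 < y$i) \<and> Fk \<alpha> \<beta> sp1 \<kappa>' y = 0" for \<kappa>' c' y
    using Av_nz by (simp add: pos_steady_states_def field_eq)
  have capb: "ss_count \<alpha> \<beta> sp1 rc1 \<kappa>' c' \<le> enat (2*N+1)" if "\<forall>j. 0 < \<kappa>'$j" for \<kappa>' c'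
  proof -
    have "ss_count \<alpha> \<beta> sp1 rc1 (fst (\<kappa>', c')) (snd (\<kappa>', c')) \<le> cap_pos \<alpha> \<beta> sp1 rc1"
      unfolding cap_pos_def by (rule SUP_upper) (use that in auto)
    then show ?thesis using cap by simp
  qed
  have big: False if "\<forall>j. 0 < \<kappa>'$j" "finite S'" "card S' \<ge> 2*N+2"
      "S' \<subseteq> pos_steady_states \<alpha> \<beta> sp1 rc1 \<kappa>' c'" for \<kappa>' c' S'
  proof (cases "finite (pos_steady_states \<alpha> \<beta> sp1 rc1 \<kappa>' c')")
    case True
    then have "card S' \<le> card (pos_steady_states \<alpha> \<beta> sp1 rc1 \<kappa>' c')" using that card_mono by blast
    then show False using capb[OF that(1), of c'] True that(3) by (simp add: ss_count_def Let_def)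
  next
    case False
    then show False using capb[OF that(1), of c'] by (simp add: ss_count_def Let_def)
  qed
  have XP: "X = pos_steady_states \<alpha> \<beta> sp1 rc1 \<kappa> c"
  proof -
    have finX: "finite X"
    proof (rule ccontr)
      assume "infinite X" then have "card X = 0" by simp
      with X_card show False by simp
    qed
    show ?thesis
    proof (cases "finite (pos_steady_states \<alpha> \<beta> sp1 rc1 \<kappa> c)")
      case True
      have "card (pos_steady_states \<alpha> \<beta> sp1 rc1 \<kappa> c) \<le> 2*N+1"
        using capb[OF kpos, of c] True by (simp add: ss_count_def Let_def)
      then show ?thesis using card_subset_eq[OF True X_ss] X_card
        by (metis X_ss True card_mono le_antisym)
    next
      case False
      then show ?thesis using capb[OF kpos, of c] by (simp add: ss_count_def Let_def)
    qed
  qed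

  define T where "T = (\<lambda>x. x$sp1) ` X"
  define D where "D = {t. \<forall>i. 0 < A i * t + B i}"
  define g where "g t = Fk \<alpha> \<beta> sp1 \<kappa> (lv B t)" for t
  define g' where "g' t = Fd \<kappa> (lv B t) (Avec \<alpha> \<beta> sp1 rc1)" for t
  have cc_eq: "compat_class \<alpha> \<beta> sp1 rc1 c = compat_class \<alpha> \<beta> sp1 rc1 (\<lambda>i. - d * B i)"
    unfolding compat_class_def using Bi by auto
  have X_l: "x = lv B (x$sp1)" if "x \<in> X" for x
    using compat1 X_ss that pss_iff by blast
  have X_pos: "\<forall>i. 0 < x$i" if "x \<in> X" for x
    using X_ss that pss_iff by blast
  have X_F: "Fk \<alpha> \<beta> sp1 \<kappa> x = 0" if "x \<in> X" for x
    using X_ss that pss_iff by blast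
  have inj: "inj_on (\<lambda>x. x$sp1) X"
    by (rule inj_onI) (metis X_l)
  have finX: "finite X"
  proof (rule ccontr)
    assume "infinite X" then have "card X = 0" by simp
    with X_card show False by simp
  qed
  have cardT: "card T = 2*N+1" unfolding T_def using card_image[OF inj] X_card by simp
  have finT: "finite T" unfolding T_def using finX by simp
  have Tne: "T \<noteq> {}" using cardT by auto
  have lB: "lv B = (\<lambda>t. t *\<^sub>R Avec \<alpha> \<beta> sp1 rc1 + (\<chi> i. B i))"
    by (rule ext) (simp add: lv_def Av vec_eq_iff mult.commute)
  have gder: "(g has_real_derivative g' t) (at t)" for t
  proof -
    have l: "(lv B has_derivative (\<lambda>s. s *\<^sub>R Avec \<alpha> \<beta> sp1 rc1)) (at t)"
      unfolding lB by (auto intro!: derivative_eq_intros)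
    have c: "((\<lambda>x. Fk \<alpha> \<beta> sp1 \<kappa> (lv B x)) has_derivative
        (\<lambda>s. Fd \<kappa> (lv B t) (s *\<^sub>R Avec \<alpha> \<beta> sp1 rc1))) (at t)"
      using has_derivative_compose[OF l F_has_der] by (simp add: o_def)
    have "(\<lambda>s. Fd \<kappa> (lv B t) (s *\<^sub>R Avec \<alpha> \<beta> sp1 rc1)) = (*) (g' t)"
      using Fd_linear[of \<kappa> "lv B t"] by (auto simp: g'_def linear_scale mult.commute)
    then show ?thesis using c unfolding has_field_derivative_def g_def by simp
  qed
  have gcont: "continuous_on S g" for S
    using gder by (meson DERIV_isCont continuous_at_imp_continuous_on)
  have X_l': "lv B (x$sp1) = x" if "x \<in> X" for x using X_l[OF that] by (rule sym)
  have X_comp: "x$i = A i * x$sp1 + B i" if "x \<in> X" for x i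
    using arg_cong[OF X_l'[OF that], of "\<lambda>v. v$i"] by (simp add: lv_def)
  have X_D: "x$sp1 \<in> D" if "x \<in> X" for x
    unfolding D_def
  proof (intro CollectI allI)
    fix i show "0 < A i * x $ sp1 + B i"
      using X_pos[OF that, rule_format, of i] X_comp[OF that, of i] by simp
  qed
  have TD: "T \<subseteq> D" unfolding T_def using X_D by blast
  have D_T: "t \<in> D \<and> g t = 0 \<longleftrightarrow> t \<in> T" for t
  proof
    assume a: "t \<in> D \<and> g t = 0"
    have "lv B t \<in> pos_steady_states \<alpha> \<beta> sp1 rc1 \<kappa> c"
      unfolding pss_iff cc_eq
    proof (intro conjI)
      show "lv B t \<in> compat_class \<alpha> \<beta> sp1 rc1 (\<lambda>i. - d * B i)"
        using a B1 by (intro compat2) (auto simp: D_def less_imp_le)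
      show "\<forall>i. 0 < lv B t $ i" using a by (simp add: D_def lv_def)
      show "Fk \<alpha> \<beta> sp1 \<kappa> (lv B t) = 0" using a g_def by simp
    qed
    then have "lv B t \<in> X" using XP by simp
    then show "t \<in> T" unfolding T_def using lv1[of B t, OF B1] by force
  next
    assume "t \<in> T"
    then obtain x where x: "x \<in> X" "t = x$sp1" unfolding T_def by blast
    show "t \<in> D \<and> g t = 0" using X_D[OF x(1)] X_F[OF x(1)] X_l'[OF x(1)] x(2) g_def by simp
  qed
  have stab: "stable_ss \<alpha> \<beta> \<kappa> x \<longleftrightarrow> g' (x$sp1) < 0" if "x \<in> X" for x
    using stable_iff[of \<kappa> x] X_l'[OF that] g'_def by simp
  have gnz: "g' t \<noteq> 0" if tT: "t \<in> T" for t
  proof -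
    obtain x where x: "x \<in> X" "t = x$sp1" using tT unfolding T_def by blast
    show ?thesis using X_nondeg x nondeg_iff[of \<kappa> x] X_l'[OF x(1)] g'_def by simp
  qed
  have D_conv: "t \<in> D" if "s1 \<in> D" "s2 \<in> D" "s1 \<le> t" "t \<le> s2" for s1 s2 t
    unfolding D_def
  proof (intro CollectI allI)
    fix i
    have "A i * t \<ge> min (A i * s1) (A i * s2)"
    proof (cases "A i \<ge> 0")
      case True then show ?thesis using that(3) by (metis min.coboundedI1 mult_left_mono)
    next
      case False then show ?thesis using that(4)
        by (metis min.coboundedI2 mult_left_mono_neg not_le less_imp_le)
    qed
    moreover have "0 < A i * s1 + B i" "0 < A i * s2 + B i" using that(1,2) unfolding D_def by auto
    ultimately show "0 < A i * t + B i" by (auto simp: min_def split: if_splits)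
  qed
  have D_open: "open D"
  proof -
    have "D = (\<Inter>i\<in>UNIV. {t. 0 < A i * t + B i})" unfolding D_def by auto
    moreover have "open {t::real. 0 < A i * t + B i}" for i
      by (intro open_Collect_less continuous_intros)
    ultimately show ?thesis by (simp add: open_INT)
  qed

  define J where "J = setJ A"
  define cls where "cls = species_class A B"
  define \<gamma> where "\<gamma> = gamma_class \<alpha> A B"
  define \<phi> where "\<phi> = phi_class \<alpha> A B"
  define fac where "fac k t = B k / \<bar>A k\<bar> + A k / \<bar>A k\<bar> * t" for k t
  define t0 where "t0 = - B \<tau> / A \<tau>"
  define IHs where "IHs = (\<Inter>k\<in>H. interval_I A B k)"
  obtain tD where tD: "tD \<in> D" using Tne TD by blast
  have HRJ: "H \<subseteq> R \<inter> J" using Heq by (auto simp: setH_def J_def)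
  have nonH: "\<gamma> k j = \<gamma> k j'" if "k \<in> R \<inter> J" "k \<notin> H" for k j j'
    using that Heq by (auto simp: setH_def \<gamma>_def J_def)
  have inJ: "i \<in> J \<longleftrightarrow> A i \<noteq> 0" for i by (simp add: J_def setJ_def)
  have cls_J: "cls k = {i. A i \<noteq> 0 \<and> B i / A i = B k / A k}" if "k \<in> J" for k
    using that by (simp add: cls_def species_class_def inJ)
  have cls_sub: "cls k \<subseteq> J" if "k \<in> J" for k using cls_J[OF that] inJ by auto
  have cls_self: "k \<in> cls k" if "k \<in> J" for k using cls_J[OF that] inJ that by auto
  have cls_eq: "cls i = cls k" if "k \<in> J" "i \<in> cls k" for i k
  proof -
    have iJ: "i \<in> J" using cls_sub[OF that(1)] that(2) by auto
    show ?thesis using cls_J[OF iJ] cls_J[OF that(1)] that(2) by auto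
  qed
  have rep_ex: "\<exists>k\<in>R \<inter> J. i \<in> cls k" if "i \<in> J" for i
  proof -
    obtain k where k: "k \<in> R" "i \<in> cls k" using reps unfolding representatives_def cls_def by blast
    have "k \<in> J"
    proof (rule ccontr)
      assume "k \<notin> J"
      then have "cls k = {i. A i = 0}" by (simp add: cls_def species_class_def inJ)
      then show False using k(2) that inJ by auto
    qed
    then show ?thesis using k by blast
  qed
  have rep_uniq: "k = k'" if "k \<in> R \<inter> J" "k' \<in> R \<inter> J" "i \<in> cls k" "i \<in> cls k'" for i k k'
  proof -
    have "cls k = cls k'" using cls_eq[of k i] cls_eq[of k' i] that by auto
    then show ?thesis using reps that unfolding representatives_def cls_def by blast
  qed
  have Jun: "J = (\<Union>k\<in>R \<inter> J. cls k)"
    using rep_ex cls_sub by blast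
  have disj: "\<forall>k\<in>R \<inter> J. \<forall>k'\<in>R \<inter> J. k \<noteq> k' \<longrightarrow> cls k \<inter> cls k' = {}"
    using rep_uniq by blast
  have samesign: "A i * A k > 0" if "k \<in> J" "i \<in> cls k" for i k
  proof -
    have Ak: "A k \<noteq> 0" using that inJ by simp
    have Ai: "A i \<noteq> 0" and r: "B i / A i = B k / A k" using cls_J[OF that(1)] that(2) by auto
    define u where "u = tD + B k / A k"
    have "0 < A i * tD + B i" "0 < A k * tD + B k" using tD by (auto simp: D_def)
    moreover have "A i * tD + B i = A i * u" using r Ai by (simp add: u_def field_simps)
    moreover have "A k * tD + B k = A k * u" using Ak by (simp add: u_def field_simps)
    ultimately have "0 < (A i * u) * (A k * u)" by simp
    then have "0 < (A i * A k) * (u * u)" by (simp add: mult_ac)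
    then show ?thesis by (metis zero_less_mult_iff not_square_less_zero)
  qed
  have cls_val: "A i * t + B i = \<bar>A i\<bar> * fac k t" if "k \<in> J" "i \<in> cls k" for i k t
  proof -
    have Ak: "A k \<noteq> 0" using that inJ by simp
    have Ai: "A i \<noteq> 0" and r: "B i / A i = B k / A k" using cls_J[OF that(1)] that(2) by auto
    have Bi': "B i = A i * (B k / A k)" using r Ai by (simp add: field_simps)
    have ss: "A i * A k > 0" using samesign[OF that] .
    show ?thesis
    proof (cases "A k > 0")
      case True
      then have "A i > 0" using ss by (auto simp: zero_less_mult_iff)
      then show ?thesis using True Bi' by (simp add: fac_def field_simps)
    next
      case False
      then have "A k < 0" using Ak by simp
      moreover then have "A i < 0" using ss by (auto simp: zero_less_mult_iff)
      ultimately show ?thesis using Bi' by (simp add: fac_def field_simps)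
    qed
  qed
  have fac_pos_D: "fac k t > 0" if "k \<in> J" "t \<in> D" for k t
  proof -
    have "0 < A k * t + B k" using that(2) by (simp add: D_def)
    then have "0 < \<bar>A k\<bar> * fac k t" using cls_val[OF that(1) cls_self[OF that(1)]] by simp
    then show ?thesis by (simp add: zero_less_mult_iff)
  qed
  have nonJB: "B i > 0" if "i \<notin> J" for i
    using tD that inJ by (auto simp: D_def dest: spec[of _ i])
  have tauJ: "\<tau> \<in> J" using tau_H HRJ by auto
  have sp1J: "sp1 \<in> J" using sp1_H HRJ by auto
  have IHs_pos: "t > 0" if "t \<in> IHs" for t
  proof -
    have "t \<in> interval_I A B sp1" using that sp1_H by (auto simp: IHs_def)
    then show ?thesis using A1 B1 by (simp add: interval_I_def)
  qed
  have IHs_fac: "fac k t > 0" if "t \<in> IHs" "k \<in> H" for k t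
  proof -
    have tk: "t \<in> interval_I A B k" using that by (auto simp: IHs_def)
    have Ak: "A k \<noteq> 0" using that(2) HRJ inJ by auto
    show ?thesis
    proof (cases "A k > 0")
      case True
      then have "t > - B k / A k" using tk by (simp add: interval_I_def)
      then show ?thesis using True by (simp add: fac_def field_simps)
    next
      case False
      then have neg: "A k < 0" using Ak by simp
      then have "t < - B k / A k" using tk by (simp add: interval_I_def)
      then show ?thesis using neg by (simp add: fac_def field_simps)
    qed
  qed
  have D_IHs: "D \<subseteq> IHs"
  proof
    fix t assume tDD: "t \<in> D"
    have t0: "t > 0" using tDD A1 B1 by (auto simp: D_def dest: spec[of _ sp1])
    show "t \<in> IHs" unfolding IHs_def
    proof
      fix k assume kH: "k \<in> H"
      have Ak: "A k \<noteq> 0" using kH HRJ inJ by auto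
      have pos: "0 < A k * t + B k" using tDD by (simp add: D_def)
      show "t \<in> interval_I A B k"
      proof (cases "A k > 0")
        case True then show ?thesis using pos by (simp add: interval_I_def field_simps)
      next
        case False
        then have "A k < 0" using Ak by simp
        then show ?thesis using pos t0 by (simp add: interval_I_def field_simps)
      qed
    qed
  qed
  have IHs_ne: "IHs \<noteq> {}" using tD D_IHs by auto
  have IHs_bdd: "bdd_below IHs" using IHs_pos by (meson bdd_below.I less_imp_le)
  have Inf_t0: "Inf IHs = t0" using tau_left by (simp add: IHs_def t0_def)
  have t0_le: "t0 \<le> t" if "t \<in> IHs" for t
    using cInf_lower[OF that IHs_bdd] Inf_t0 by simp
  have t0_int: "t \<in> IHs" if pI: "p \<in> IHs" and tl: "t0 < t" and tp: "t \<le> p" for p t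
  proof -
    obtain s where s: "s \<in> IHs" "s < t" using cInf_less_iff[OF IHs_ne IHs_bdd] Inf_t0 tl by auto
    show ?thesis unfolding IHs_def
    proof
      fix k assume kH: "k \<in> H"
      have "s \<in> interval_I A B k" "p \<in> interval_I A B k" using s(1) pI kH by (auto simp: IHs_def)
      then show "t \<in> interval_I A B k" using s(2) tp
        by (auto simp: interval_I_def split: if_splits)
    qed
  qed
  have fac_tau: "fac \<tau> t0 = 0" using tau_pos by (simp add: fac_def t0_def)
  have fac_t0_nz: "fac k t0 \<noteq> 0" if "k \<in> H" "k \<noteq> \<tau>" for k
  proof
    assume z: "fac k t0 = 0"
    have kJ: "k \<in> J" using that HRJ by auto
    have Ak: "A k \<noteq> 0" using kJ inJ by simp
    have "B k / A k = B \<tau> / A \<tau>"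
    proof -
      have "A k * t0 + B k = \<bar>A k\<bar> * fac k t0" using cls_val[OF kJ cls_self[OF kJ]] by simp
      then have "A k * t0 + B k = 0" using z by simp
      then have "B k / A k = - t0" using Ak by (simp add: field_simps)
      then show ?thesis by (simp add: t0_def)
    qed
    then have "cls k = cls \<tau>" using cls_J[OF kJ] cls_J[OF tauJ] by simp
    then show False using that reps HRJ tau_H unfolding representatives_def cls_def by blast
  qed

  define Cj where "Cj j = (\<Prod>i\<in>J. \<bar>A i\<bar> ^ \<alpha> i j) * (\<Prod>i\<in>UNIV - J. B i ^ \<alpha> i j)" for j
  define ht where "ht \<kappa>' t = (\<Sum>j\<in>UNIV. stoich_mat \<alpha> \<beta> $ sp1 $ j * \<kappa>'$j * Cj j
      * (\<Prod>k\<in>H. fac k t ^ \<gamma> k j))" for \<kappa>' :: "real^'r" and t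
  have Cj_nz: "Cj j \<noteq> 0" for j
  proof -
    have a: "\<forall>i\<in>UNIV - J. B i \<noteq> 0" using nonJB by (metis DiffD2 less_irrefl)
    have b: "\<forall>i\<in>J. \<bar>A i\<bar> \<noteq> 0" using inJ by simp
    show ?thesis unfolding Cj_def using a b by (simp add: prod_zero_iff)
  qed
  have sumcls: "(\<Sum>i\<in>cls k. \<alpha> i j) = \<phi> k + \<gamma> k j" for k j
  proof -
    have "\<phi> k \<le> (\<Sum>i\<in>cls k. \<alpha> i j)"
      unfolding \<phi>_def phi_class_def cls_def by (rule Min_le) auto
    then show ?thesis by (simp add: \<gamma>_def gamma_class_def \<phi>_def cls_def)
  qed
  have FL: "\<exists>P>0. Fk \<alpha> \<beta> sp1 \<kappa>' y = P * ht \<kappa>' t"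
    if w1: "\<forall>k\<in>R \<inter> J. w k > 0" and w2: "\<forall>k\<in>R \<inter> J. \<forall>i\<in>cls k. y$i = \<bar>A i\<bar> * w k"
      and w3: "\<forall>i. i \<notin> J \<longrightarrow> y$i = B i" and w4: "\<forall>k\<in>H. w k = fac k t"
    for y t w and \<kappa>' :: "real^'r"
  proof -
    define P where "P = (\<Prod>k\<in>R \<inter> J. w k ^ \<phi> k) * (\<Prod>k\<in>R \<inter> J - H. w k ^ \<gamma> k rc1)"
    have Ppos: "P > 0" unfolding P_def using w1 by (intro mult_pos_pos prod_pos) auto
    have fin: "finite (R \<inter> J)" by simp
    have prodj: "(\<Prod>i\<in>UNIV. y$i ^ \<alpha> i j) = Cj j * P * (\<Prod>k\<in>H. fac k t ^ \<gamma> k j)" for j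
    proof -
      have s1: "(\<Prod>i\<in>UNIV. y$i ^ \<alpha> i j) = (\<Prod>i\<in>UNIV - J. y$i ^ \<alpha> i j) * (\<Prod>i\<in>J. y$i ^ \<alpha> i j)"
        by (rule prod.subset_diff) auto
      have s2: "(\<Prod>i\<in>UNIV - J. y$i ^ \<alpha> i j) = (\<Prod>i\<in>UNIV - J. B i ^ \<alpha> i j)"
        using w3 by (intro prod.cong) auto
      have U: "\<And>f :: 's \<Rightarrow> real. (\<Prod>i\<in>J. f i) = (\<Prod>k\<in>R \<inter> J. \<Prod>i\<in>cls k. f i)"
      proof -
        fix f :: "'s \<Rightarrow> real"
        have "(\<Prod>i\<in>(\<Union>k\<in>R \<inter> J. cls k). f i) = (\<Prod>k\<in>R \<inter> J. \<Prod>i\<in>cls k. f i)"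
          by (rule prod.UNION_disjoint) (use disj in auto)
        then show "(\<Prod>i\<in>J. f i) = (\<Prod>k\<in>R \<inter> J. \<Prod>i\<in>cls k. f i)" using Jun by simp
      qed
      have "(\<Prod>i\<in>J. y$i ^ \<alpha> i j) = (\<Prod>k\<in>R \<inter> J. \<Prod>i\<in>cls k. y$i ^ \<alpha> i j)" by (rule U)
      also have "\<dots> = (\<Prod>k\<in>R \<inter> J. \<Prod>i\<in>cls k. \<bar>A i\<bar> ^ \<alpha> i j * w k ^ \<alpha> i j)"
        using w2 by (intro prod.cong refl) (simp add: power_mult_distrib)
      also have "\<dots> = (\<Prod>k\<in>R \<inter> J. (\<Prod>i\<in>cls k. \<bar>A i\<bar> ^ \<alpha> i j) * w k ^ (\<Sum>i\<in>cls k. \<alpha> i j))"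
        by (simp add: prod.distrib power_sum)
      also have "\<dots> = (\<Prod>k\<in>R \<inter> J. \<Prod>i\<in>cls k. \<bar>A i\<bar> ^ \<alpha> i j) * (\<Prod>k\<in>R \<inter> J. w k ^ (\<phi> k + \<gamma> k j))"
        by (simp add: prod.distrib sumcls)
      also have "(\<Prod>k\<in>R \<inter> J. \<Prod>i\<in>cls k. \<bar>A i\<bar> ^ \<alpha> i j) = (\<Prod>i\<in>J. \<bar>A i\<bar> ^ \<alpha> i j)"
        by (rule U[symmetric])
      also have "(\<Prod>k\<in>R \<inter> J. w k ^ (\<phi> k + \<gamma> k j))
          = (\<Prod>k\<in>R \<inter> J. w k ^ \<phi> k) * (\<Prod>k\<in>R \<inter> J. w k ^ \<gamma> k j)"
        by (simp add: power_add prod.distrib)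
      also have "(\<Prod>k\<in>R \<inter> J. w k ^ \<gamma> k j) = (\<Prod>k\<in>R \<inter> J - H. w k ^ \<gamma> k j) * (\<Prod>k\<in>H. w k ^ \<gamma> k j)"
        by (rule prod.subset_diff) (use HRJ in auto)
      also have "(\<Prod>k\<in>R \<inter> J - H. w k ^ \<gamma> k j) = (\<Prod>k\<in>R \<inter> J - H. w k ^ \<gamma> k rc1)"
      proof (intro prod.cong refl)
        fix k assume "k \<in> R \<inter> J - H"
        then show "w k ^ \<gamma> k j = w k ^ \<gamma> k rc1" using nonH[of k j rc1] by simp
      qed
      also have "(\<Prod>k\<in>H. w k ^ \<gamma> k j) = (\<Prod>k\<in>H. fac k t ^ \<gamma> k j)"
        using w4 by (intro prod.cong refl) auto
      finally have "(\<Prod>i\<in>J. y$i ^ \<alpha> i j) = (\<Prod>i\<in>J. \<bar>A i\<bar> ^ \<alpha> i j) *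
          ((\<Prod>k\<in>R \<inter> J. w k ^ \<phi> k) * ((\<Prod>k\<in>R \<inter> J - H. w k ^ \<gamma> k rc1) * (\<Prod>k\<in>H. fac k t ^ \<gamma> k j)))" .
      then show ?thesis unfolding s1 s2 Cj_def P_def by (simp add: mult_ac)
    qed
    have "Fk \<alpha> \<beta> sp1 \<kappa>' y = P * ht \<kappa>' t"
      unfolding Fk_def ht_def prodj by (simp add: sum_distrib_left mult_ac)
    then show ?thesis using Ppos by blast
  qed

  have fac_t0: "fac k t0 = B k / \<bar>A k\<bar> - A k / \<bar>A k\<bar> * (B \<tau> / A \<tau>)" for k
    by (simp add: fac_def t0_def)
  have Sig: "(\<Sum>j\<in>setL \<alpha> A B \<tau>.
            stoich_mat \<alpha> \<beta> $ sp1 $ j * \<kappa> $ j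
            * (\<Prod>i\<in>setJ A. \<bar>A i\<bar> ^ \<alpha> i j)
            * (\<Prod>i\<in>UNIV - setJ A. B i ^ \<alpha> i j)
            * (\<Prod>k\<in>H - {\<tau>}. (B k / \<bar>A k\<bar> - A k / \<bar>A k\<bar> * (B \<tau> / A \<tau>))
                                   ^ gamma_class \<alpha> A B k j)) = ht \<kappa> t0"
  proof -
    define f where "f j = stoich_mat \<alpha> \<beta> $ sp1 $ j * \<kappa>$j * Cj j * (\<Prod>k\<in>H. fac k t0 ^ \<gamma> k j)" for j
    have L: "setL \<alpha> A B \<tau> = {j. \<gamma> \<tau> j = 0}" by (simp add: setL_def \<gamma>_def)
    have pr: "(\<Prod>k\<in>H. fac k t0 ^ \<gamma> k j) = fac \<tau> t0 ^ \<gamma> \<tau> j * (\<Prod>k\<in>H - {\<tau>}. fac k t0 ^ \<gamma> k j)" for j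
      using tau_H by (simp add: prod.remove)
    have "ht \<kappa> t0 = (\<Sum>j\<in>UNIV. f j)" by (simp add: ht_def f_def)
    also have "\<dots> = (\<Sum>j\<in>setL \<alpha> A B \<tau>. f j)"
    proof (rule sum.mono_neutral_right)
      show "\<forall>j\<in>UNIV - setL \<alpha> A B \<tau>. f j = 0"
        using fac_tau by (auto simp: L f_def pr)
    qed auto
    also have "\<dots> = (\<Sum>j\<in>setL \<alpha> A B \<tau>.
            stoich_mat \<alpha> \<beta> $ sp1 $ j * \<kappa> $ j
            * (\<Prod>i\<in>setJ A. \<bar>A i\<bar> ^ \<alpha> i j)
            * (\<Prod>i\<in>UNIV - setJ A. B i ^ \<alpha> i j)
            * (\<Prod>k\<in>H - {\<tau>}. (B k / \<bar>A k\<bar> - A k / \<bar>A k\<bar> * (B \<tau> / A \<tau>))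
                                   ^ gamma_class \<alpha> A B k j))"
    proof (intro sum.cong refl)
      fix j assume "j \<in> setL \<alpha> A B \<tau>"
      then have g0: "\<gamma> \<tau> j = 0" by (simp add: L)
      have "f j = stoich_mat \<alpha> \<beta> $ sp1 $ j * \<kappa>$j * Cj j * (\<Prod>k\<in>H - {\<tau>}. fac k t0 ^ \<gamma> k j)"
        unfolding f_def pr g0 by simp
      then show "f j = stoich_mat \<alpha> \<beta> $ sp1 $ j * \<kappa> $ j
            * (\<Prod>i\<in>setJ A. \<bar>A i\<bar> ^ \<alpha> i j)
            * (\<Prod>i\<in>UNIV - setJ A. B i ^ \<alpha> i j)
            * (\<Prod>k\<in>H - {\<tau>}. (B k / \<bar>A k\<bar> - A k / \<bar>A k\<bar> * (B \<tau> / A \<tau>))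
                                   ^ gamma_class \<alpha> A B k j)"
        unfolding Cj_def J_def fac_t0 \<gamma>_def by (simp add: mult_ac)
    qed
    finally show ?thesis by simp
  qed
  have gP: "\<exists>P>0. g t = P * ht \<kappa> t" if tDD: "t \<in> D" for t
    unfolding g_def
  proof (rule FL[where w = "\<lambda>k. fac k t"])
    show "\<forall>k\<in>R \<inter> J. 0 < fac k t" using fac_pos_D tDD by auto
    show "\<forall>k\<in>R \<inter> J. \<forall>i\<in>cls k. lv B t $ i = \<bar>A i\<bar> * fac k t"
      using cls_val by (simp add: lv_def)
    show "\<forall>i. i \<notin> J \<longrightarrow> lv B t $ i = B i" using inJ by (simp add: lv_def)
    show "\<forall>k\<in>H. fac k t = fac k t" by simp
  qed
  have ht_cont: "continuous_on S (ht \<kappa>')" for S \<kappa>'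
    unfolding ht_def fac_def by (intro continuous_intros)

  define n where "n = 2*N+1"
  define Ts where "Ts = sorted_list_of_set T"
  define rt where "rt i = Ts ! i" for i
  have npos: "0 < n" by (simp add: n_def)
  have lenTs: "length Ts = n" using cardT n_def Ts_def by simp
  have setTs: "set Ts = T" using finT Ts_def by simp
  have sTs: "sorted_wrt (<) Ts" unfolding Ts_def by (rule strict_sorted_list_of_set)
  have rt_mono: "rt i < rt j" if "i < j" "j < n" for i j
    using sorted_wrt_nth_less[OF sTs that(1)] that lenTs rt_def by simp
  have rt_le: "rt i \<le> rt j" if "i \<le> j" "j < n" for i j
    using rt_mono[of i j] that by (cases "i = j") auto
  have rt_T: "rt i \<in> T" if "i < n" for i using that lenTs setTs rt_def nth_mem by metis
  have T_rt: "\<exists>i<n. t = rt i" if "t \<in> T" for t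
    using that setTs lenTs rt_def by (metis in_set_conv_nth)
  have rtD: "rt i \<in> D" if "i < n" for i using rt_T[OF that] TD by auto
  have ballD: "\<exists>e>0. \<forall>s. \<bar>s - t\<bar> < e \<longrightarrow> s \<in> D" if tDD: "t \<in> D" for t
  proof -
    obtain e where "e > 0" "ball t e \<subseteq> D" using D_open tDD open_contains_ball by metis
    then show ?thesis by (intro exI[of _ e]) (auto simp: dist_real_def abs_minus_commute)
  qed
  obtain p where p: "p \<in> D" "p < rt 0" "t0 < p"
  proof -
    obtain e where e: "e > 0" "\<forall>s. \<bar>s - rt 0\<bar> < e \<longrightarrow> s \<in> D" using ballD rtD npos by blast
    define p0 where "p0 = rt 0 - e/2"
    have p0D: "p0 \<in> D" using e by (simp add: p0_def)
    have "t0 \<le> p0" using t0_le D_IHs p0D by auto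
    moreover have "p0 < rt 0" using e by (simp add: p0_def)
    moreover have "(p0 + rt 0) / 2 \<in> D" using D_conv[OF p0D rtD[OF npos]] calculation by simp
    ultimately show ?thesis using that[of "(p0 + rt 0) / 2"] by simp
  qed
  obtain q where q: "q \<in> D" "rt (n-1) < q"
  proof -
    have nD: "rt (n-1) \<in> D" using rtD npos by simp
    obtain e where e: "e > 0" "\<forall>s. \<bar>s - rt (n-1)\<bar> < e \<longrightarrow> s \<in> D" using ballD nD by blast
    show ?thesis using that[of "rt (n-1) + e/2"] e by simp
  qed
  define w where "w i = (if i = 0 then p else if i = n then q else (rt (i-1) + rt i) / 2)" for i
  have w_lt: "w i < rt i" if "i < n" for i
  proof (cases "i = 0")
    case True then show ?thesis using p by (simp add: w_def)
  next
    case False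
    then have "rt (i-1) < rt i" using rt_mono that by simp
    then show ?thesis using False that by (simp add: w_def)
  qed
  have w_gt: "rt i < w (Suc i)" if "i < n" for i
  proof (cases "Suc i = n")
    case True
    then have "i = n - 1" by simp
    then show ?thesis using q True by (simp add: w_def)
  next
    case False
    then have "rt i < rt (Suc i)" using rt_mono that by simp
    then show ?thesis using False that by (simp add: w_def)
  qed
  have w_D: "w i \<in> D" if iln: "i \<le> n" for i
  proof -
    consider "i = 0" | "i = n" | "0 < i" "i < n" using iln by linarith
    then show ?thesis
    proof cases
      case 1 then show ?thesis using p by (simp add: w_def)
    next
      case 2 then show ?thesis using q npos by (simp add: w_def)
    next
      case 3
      have a: "rt (i-1) \<in> D" "rt i \<in> D" using rtD 3 by auto
      have "rt (i-1) < rt i" using rt_mono 3 by simp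
      then show ?thesis using 3 D_conv[OF a] by (simp add: w_def)
    qed
  qed
  have roots_in: "g t = 0 \<longleftrightarrow> t \<in> T" if "a \<in> D" "b \<in> D" "t \<in> {a..b}" for a b t
    using D_T D_conv[OF that(1,2)] that(3) by auto
  have Zi: "T \<inter> {w i..w (Suc i)} = {rt i}" if "i < n" for i
  proof
    show "{rt i} \<subseteq> T \<inter> {w i..w (Suc i)}" using rt_T w_lt w_gt that by (auto simp: less_imp_le)
  next
    show "T \<inter> {w i..w (Suc i)} \<subseteq> {rt i}"
    proof
      fix t assume t: "t \<in> T \<inter> {w i..w (Suc i)}"
      then obtain m where m: "m < n" "t = rt m" using T_rt by blast
      have "m = i"
      proof (rule ccontr)
        assume "m \<noteq> i"
        then consider "m < i" | "i < m" by linarith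
        then show False
        proof cases
          case 1
          then have "rt m \<le> rt (i-1)" using rt_le that by simp
          moreover have "rt (i-1) < rt i" using rt_mono that 1 by simp
          moreover have "w i = (rt (i-1) + rt i) / 2" using 1 that by (simp add: w_def)
          ultimately show False using t m by auto
        next
          case 2
          then have "rt (Suc i) \<le> rt m" using rt_le m by simp
          moreover have "rt i < rt (Suc i)" using rt_mono 2 m by simp
          moreover have "w (Suc i) = (rt i + rt (Suc i)) / 2" using 2 m by (simp add: w_def)
          ultimately show False using t m by auto
        qed
      qed
      then show "t \<in> {rt i}" using m by simp
    qed
  qed
  have alt: "g (w i) * g (w (Suc i)) < 0" if "i < n" for i
  proof -
    have wD: "w i \<in> D" "w (Suc i) \<in> D" using w_D that by auto
    have wle: "w i \<le> w (Suc i)" using w_lt[OF that] w_gt[OF that] by simp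
    have rz: "\<forall>t\<in>{w i..w (Suc i)}. g t = 0 \<longleftrightarrow> t \<in> {rt i}"
      using roots_in[OF wD] Zi[OF that] by blast
    have sc: "int (card {z\<in>{rt i}. g' z < 0}) - int (card {z\<in>{rt i}. 0 < g' z})
          = (if g (w i) > 0 then 1 else 0) - (if g (w (Suc i)) > 0 then 1 else 0)"
      by (rule sign_count[of "{rt i}" "w i" "w (Suc i)" g g']) (use w_lt[OF that] w_gt[OF that] gcont gder gnz rt_T[OF that] rz wle in auto)
    have nz: "g' (rt i) \<noteq> 0" using gnz rt_T that by simp
    have "g (w i) \<noteq> 0" "g (w (Suc i)) \<noteq> 0"
      using rz wle w_lt[OF that] w_gt[OF that] by auto
    moreover have d: "int (card {z\<in>{rt i}. g' z < 0}) - int (card {z\<in>{rt i}. 0 < g' z}) \<noteq> 0"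
    proof (cases "g' (rt i) < 0")
      case True
      then have e1: "{z\<in>{rt i}. g' z < 0} = {rt i}" and e2: "{z\<in>{rt i}. 0 < g' z} = {}" by auto
      show ?thesis unfolding e1 e2 by simp
    next
      case False
      then have "0 < g' (rt i)" using nz by simp
      then have e1: "{z\<in>{rt i}. g' z < 0} = {}" and e2: "{z\<in>{rt i}. 0 < g' z} = {rt i}" by auto
      show ?thesis unfolding e1 e2 by simp
    qed
    ultimately show ?thesis using sc
      by (auto simp: mult_less_0_iff split: if_splits)
  qed
  have pnT: "p \<notin> T"
  proof
    assume "p \<in> T"
    then obtain m where m: "m < n" "p = rt m" using T_rt by blast
    then have "rt 0 \<le> rt m" using rt_le by simp
    then show False using p m by simp
  qed
  have TPQ: "\<forall>z\<in>T. p < z \<and> z < q"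
  proof
    fix z assume "z \<in> T"
    then obtain m where m: "m < n" "z = rt m" using T_rt by blast
    have "rt 0 \<le> rt m" "rt m \<le> rt (n-1)" using rt_le m by auto
    then show "p < z \<and> z < q" using p q m by simp
  qed
  have pq: "p < q" using rt_le[of 0 "n-1"] p q npos by simp
  have main_count: "int (card {z\<in>T. g' z < 0}) - int (card {z\<in>T. 0 < g' z})
          = (if g p > 0 then 1 else 0) - (if g q > 0 then 1 else 0)"
    by (rule sign_count[of T p q g g']) (use finT TPQ gcont gder gnz roots_in[OF p(1) q(1)] pq in \<open>auto simp: less_imp_le\<close>)
  have card_split: "card {z\<in>T. g' z < 0} + card {z\<in>T. 0 < g' z} = n"
  proof -
    have "{z\<in>T. g' z < 0} \<union> {z\<in>T. 0 < g' z} = T" using gnz by (auto simp: neq_iff)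
    moreover have "{z\<in>T. g' z < 0} \<inter> {z\<in>T. 0 < g' z} = {}" by auto
    ultimately show ?thesis using card_Un_disjoint[of "{z\<in>T. g' z < 0}" "{z\<in>T. 0 < g' z}"] finT cardT n_def
      by simp
  qed
  have gp_nz: "g p \<noteq> 0" using D_T p pnT by blast
  have card_stable: "card {x\<in>X. stable_ss \<alpha> \<beta> \<kappa> x} = card {z\<in>T. g' z < 0}"
  proof -
    have im: "(\<lambda>x. x$sp1) ` {x\<in>X. stable_ss \<alpha> \<beta> \<kappa> x} = {z\<in>T. g' z < 0}"
    proof (intro equalityI subsetI)
      fix z assume "z \<in> (\<lambda>x. x$sp1) ` {x\<in>X. stable_ss \<alpha> \<beta> \<kappa> x}"
      then obtain x where x: "x \<in> X" "stable_ss \<alpha> \<beta> \<kappa> x" "z = x$sp1" by blast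
      then show "z \<in> {z\<in>T. g' z < 0}" using stab[OF x(1)] unfolding T_def by blast
    next
      fix z assume "z \<in> {z\<in>T. g' z < 0}"
      then obtain x where x: "x \<in> X" "z = x$sp1" "g' z < 0" unfolding T_def by blast
      then show "z \<in> (\<lambda>x. x$sp1) ` {x\<in>X. stable_ss \<alpha> \<beta> \<kappa> x}" using stab[OF x(1)] by blast
    qed
    have "inj_on (\<lambda>x. x$sp1) {x\<in>X. stable_ss \<alpha> \<beta> \<kappa> x}" using inj by (rule inj_on_subset) auto
    from card_image[OF this] show ?thesis unfolding im by simp
  qed

  have htg: "(g t > 0 \<longleftrightarrow> ht \<kappa> t > 0) \<and> (g t = 0 \<longleftrightarrow> ht \<kappa> t = 0)" if tDD: "t \<in> D" for t
  proof -
    obtain P where "P > 0" "g t = P * ht \<kappa> t" using gP[OF tDD] by blast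
    then show ?thesis by (simp add: zero_less_mult_iff)
  qed
  have w_alt_ht: "ht \<kappa> (w i) * ht \<kappa> (w (Suc i)) < 0" if iln: "i < n" for i
  proof -
    have wD: "w i \<in> D" "w (Suc i) \<in> D" using w_D iln by auto
    obtain P1 where P1: "P1 > 0" "g (w i) = P1 * ht \<kappa> (w i)" using gP[OF wD(1)] by blast
    obtain P2 where P2: "P2 > 0" "g (w (Suc i)) = P2 * ht \<kappa> (w (Suc i))" using gP[OF wD(2)] by blast
    have "(P1 * P2) * (ht \<kappa> (w i) * ht \<kappa> (w (Suc i))) < 0"
      using alt[OF iln] P1 P2 by (simp add: mult_ac)
    then show ?thesis using P1 P2 by (simp add: mult_less_0_iff)
  qed
  have wI: "w i \<in> IHs" if "i \<le> n" for i using w_D[OF that] D_IHs by auto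
  have qI: "q \<in> IHs" using q D_IHs by auto
  define z where "z i = (if i = 0 then t0 else w (i - 1))" for i
  have z_mono: "\<forall>i<n+1. z i < z (Suc i)"
  proof (intro allI impI)
    fix i assume i: "i < n+1"
    show "z i < z (Suc i)"
    proof (cases "i = 0")
      case True then show ?thesis using p by (simp add: z_def w_def)
    next
      case False
      have i1: "i - 1 < n" using i False by simp
      have si: "Suc (i-1) = i" using False by simp
      have "w (i-1) < rt (i-1)" "rt (i-1) < w (Suc (i-1))" using w_lt[OF i1] w_gt[OF i1] by auto
      then show ?thesis using False si by (simp add: z_def)
    qed
  qed
  have count_new: False
    if kp: "\<forall>j. 0 < \<kappa>'$j" and c1: "ht \<kappa>' t0 * ht \<kappa>' (w 0) < 0"
      and c2: "\<forall>i<n. ht \<kappa>' (w i) * ht \<kappa>' (w (Suc i)) < 0" for \<kappa>'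
  proof -
    have zalt: "\<forall>i<n+1. ht \<kappa>' (z i) * ht \<kappa>' (z (Suc i)) < 0"
    proof (intro allI impI)
      fix i assume i: "i < n+1"
      show "ht \<kappa>' (z i) * ht \<kappa>' (z (Suc i)) < 0"
      proof (cases "i = 0")
        case True then show ?thesis using c1 by (simp add: z_def)
      next
        case False
        define i' where "i' = i - 1"
        have i': "i = Suc i'" "i' < n" using i False by (auto simp: i'_def)
        then show ?thesis using c2 by (simp add: z_def)
      qed
    qed
    obtain S where S: "finite S" "card S = n+1" "S \<subseteq> {t. z 0 < t \<and> t < z (n+1) \<and> ht \<kappa>' t = 0}"
      using alt_roots[of "n+1" z "ht \<kappa>'"] z_mono zalt ht_cont by blast
    have zn: "z 0 = t0" "z (n+1) = q" using npos by (simp_all add: z_def w_def)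
    define Rb where "Rb = q + 1"
    define B' where "B' i = (if i \<in> J \<and> (\<forall>k\<in>H. i \<notin> cls k) then (if A i > 0 then A i else - A i * Rb) else B i)" for i
    have B'1: "B' sp1 = 0" using sp1_H cls_self[OF sp1J] B1 by (auto simp: B'_def)
    have Sin: "lv B' t \<in> pos_steady_states \<alpha> \<beta> sp1 rc1 \<kappa>' (\<lambda>i. - d * B' i)" if tS: "t \<in> S" for t
    proof -
      have tr: "t0 < t" "t < q" "ht \<kappa>' t = 0" using tS S(3) zn by auto
      have tI: "t \<in> IHs" using t0_int[OF qI tr(1)] tr(2) by simp
      have tpos: "t > 0" using IHs_pos[OF tI] .
      define w' where "w' k = (if k \<in> H then fac k t else if A k > 0 then t + 1 else Rb - t)" for k
      have w1: "\<forall>k\<in>R \<inter> J. w' k > 0"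
        using IHs_fac[OF tI] tpos tr(2) by (auto simp: w'_def Rb_def)
      have w2: "\<forall>k\<in>R \<inter> J. \<forall>i\<in>cls k. lv B' t $ i = \<bar>A i\<bar> * w' k"
      proof (intro ballI)
        fix k i assume k: "k \<in> R \<inter> J" and i: "i \<in> cls k"
        have kJ: "k \<in> J" using k by simp
        show "lv B' t $ i = \<bar>A i\<bar> * w' k"
        proof (cases "k \<in> H")
          case True
          then have "B' i = B i" using i by (auto simp: B'_def)
          then show ?thesis using cls_val[OF kJ i, of t] True by (simp add: lv_def w'_def)
        next
          case False
          have iJ: "i \<in> J" using cls_sub[OF kJ] i by auto
          have nk: "\<forall>k'\<in>H. i \<notin> cls k'"
          proof (intro ballI notI)
            fix k' assume "k' \<in> H" "i \<in> cls k'"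
            then have "k' = k" using rep_uniq[of k' k i] HRJ k i by auto
            then show False using False \<open>k' \<in> H\<close> by simp
          qed
          have ss: "A i * A k > 0" using samesign[OF kJ i] .
          show ?thesis
          proof (cases "A k > 0")
            case True
            then have "A i > 0" using ss by (auto simp: zero_less_mult_iff)
            then show ?thesis using True False iJ nk by (simp add: lv_def w'_def B'_def algebra_simps)
          next
            case nA: False
            then have "A k < 0" using kJ inJ by (simp add: not_less le_less)
            then have "A i < 0" using ss by (auto simp: zero_less_mult_iff)
            then show ?thesis using nA False iJ nk by (simp add: lv_def w'_def B'_def algebra_simps)
          qed
        qed
      qed
      have w3: "\<forall>i. i \<notin> J \<longrightarrow> lv B' t $ i = B i" using inJ by (simp add: lv_def B'_def)
      have w4: "\<forall>k\<in>H. w' k = fac k t" by (simp add: w'_def)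
      obtain P where P: "P > 0" "Fk \<alpha> \<beta> sp1 \<kappa>' (lv B' t) = P * ht \<kappa>' t"
        using FL[OF w1 w2 w3 w4] by blast
      have posy: "\<forall>i. 0 < lv B' t $ i"
      proof
        fix i
        show "0 < lv B' t $ i"
        proof (cases "i \<in> J")
          case True
          then obtain k where k: "k \<in> R \<inter> J" "i \<in> cls k" using rep_ex by blast
          then show ?thesis using w1 w2 True inJ by (simp add: zero_less_mult_iff)
        next
          case False
          then show ?thesis using w3 nonJB by simp
        qed
      qed
      show ?thesis unfolding pss_iff
      proof (intro conjI)
        show "lv B' t \<in> compat_class \<alpha> \<beta> sp1 rc1 (\<lambda>i. - d * B' i)"
          by (rule compat2) (use posy B'1 in \<open>auto simp: lv_def less_imp_le\<close>)
        show "\<forall>i. 0 < lv B' t $ i" by (rule posy)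
        show "Fk \<alpha> \<beta> sp1 \<kappa>' (lv B' t) = 0" using P tr(3) by simp
      qed
    qed
    have injS: "inj_on (lv B') S"
    proof (rule inj_onI)
      fix x y assume "lv B' x = lv B' y"
      then have "lv B' x $ sp1 = lv B' y $ sp1" by simp
      then show "x = y" using lv1[of B' x, OF B'1] lv1[of B' y, OF B'1] by simp
    qed
    show False
    proof (rule big[of \<kappa>' "lv B' ` S" "\<lambda>i. - d * B' i"])
      show "\<forall>j. 0 < \<kappa>'$j" by (rule kp)
      show "finite (lv B' ` S)" using S(1) by simp
      show "2*N+2 \<le> card (lv B' ` S)" using card_image[OF injS] S(2) n_def by simp
      show "lv B' ` S \<subseteq> pos_steady_states \<alpha> \<beta> sp1 rc1 \<kappa>' (\<lambda>i. - d * B' i)" using Sin by blast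
    qed
  qed
  have KC: "ht \<kappa> t0 \<noteq> 0 \<and> (g p > 0 \<longleftrightarrow> ht \<kappa> t0 > 0)"
  proof (rule ccontr)
    assume nKC: "\<not> (ht \<kappa> t0 \<noteq> 0 \<and> (g p > 0 \<longleftrightarrow> ht \<kappa> t0 > 0))"
    have hp: "ht \<kappa> p \<noteq> 0" and hpg: "g p > 0 \<longleftrightarrow> ht \<kappa> p > 0"
      using htg[OF p(1)] gp_nz by auto
    have w0: "w 0 = p" by (simp add: w_def)
    show False
    proof (cases "ht \<kappa> t0 = 0")
      case False
      then have "ht \<kappa> t0 * ht \<kappa> p < 0" using nKC hp hpg by (auto simp: mult_less_0_iff)
      then show False using count_new[of \<kappa>] kpos w_alt_ht w0 by simp
    next
      case True
      define fj where "fj j = (\<Sum>i\<in>cls \<tau>. \<alpha> i j)" for j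
      have "Min (range fj) \<in> range fj" by (rule Min_in) auto
      then obtain j0 where "fj j0 = Min (range fj)" by (metis imageE)
      then have g0: "\<gamma> \<tau> j0 = 0" by (simp add: \<gamma>_def gamma_class_def phi_class_def fj_def cls_def)
      define qf where "qf t = stoich_mat \<alpha> \<beta> $ sp1 $ j0 * Cj j0 * (\<Prod>k\<in>H. fac k t ^ \<gamma> k j0)" for t
      have mj0: "stoich_mat \<alpha> \<beta> $ sp1 $ j0 \<noteq> 0"
      proof
        assume z0: "stoich_mat \<alpha> \<beta> $ sp1 $ j0 = 0"
        have "(\<lambda>i. \<alpha> i j0) = (\<lambda>i. \<beta> i j0)"
        proof
          fix i
          have "stoich_mat \<alpha> \<beta> $ i $ j0 = 0" using cp[of i j0] z0 by simp
          then show "\<alpha> i j0 = \<beta> i j0" by (simp add: stoich_mat_def)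
        qed
        then show False using network unfolding reaction_network_def by blast
      qed
      have qf0: "qf t0 \<noteq> 0"
      proof -
        have "(\<Prod>k\<in>H. fac k t0 ^ \<gamma> k j0) = fac \<tau> t0 ^ \<gamma> \<tau> j0 * (\<Prod>k\<in>H - {\<tau>}. fac k t0 ^ \<gamma> k j0)"
          using tau_H by (simp add: prod.remove)
        also have "\<dots> = (\<Prod>k\<in>H - {\<tau>}. fac k t0 ^ \<gamma> k j0)" using g0 by simp
        also have "\<dots> \<noteq> 0" using fac_t0_nz by (simp add: prod_zero_iff)
        finally show ?thesis using mj0 Cj_nz by (simp add: qf_def)
      qed
      have pert: "ht (\<kappa> + \<epsilon> *\<^sub>R axis j0 1) t = ht \<kappa> t + \<epsilon> * qf t" for \<epsilon> t
      proof -
        have "ht (\<kappa> + \<epsilon> *\<^sub>R axis j0 1) t = (\<Sum>j\<in>UNIV. stoich_mat \<alpha> \<beta> $ sp1 $ j * \<kappa>$j * Cj j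
            * (\<Prod>k\<in>H. fac k t ^ \<gamma> k j) + (if j = j0 then \<epsilon> * qf t else 0))"
          unfolding ht_def by (intro sum.cong refl) (auto simp: axis_def qf_def algebra_simps)
        also have "\<dots> = ht \<kappa> t + \<epsilon> * qf t" by (simp add: sum.distrib ht_def)
        finally show ?thesis .
      qed
      have hw_nz: "ht \<kappa> (w i) \<noteq> 0" if iln: "i \<le> n" for i
      proof (cases "i < n")
        case True then show ?thesis using w_alt_ht[OF True] by auto
      next
        case False
        then have "i = Suc (n-1)" "n - 1 < n" using iln npos by auto
        then show ?thesis using w_alt_ht[of "n-1"] by auto
      qed
      define m where "m = Min ((\<lambda>i. \<bar>ht \<kappa> (w i)\<bar> / (\<bar>qf (w i)\<bar> + 1)) ` {..n})"
      have mpos: "m > 0" unfolding m_def using hw_nz by (subst Min_gr_iff) auto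
      have mle: "m \<le> \<bar>ht \<kappa> (w i)\<bar> / (\<bar>qf (w i)\<bar> + 1)" if "i \<le> n" for i
        unfolding m_def using that by (intro Min_le) auto
      define e where "e = min m (\<kappa>$j0) / 2"
      have epos: "e > 0" using mpos kpos by (simp add: e_def)
      have em: "e < m" using mpos by (simp add: e_def)
      have ek: "e < \<kappa>$j0"
      proof -
        have "0 < \<kappa>$j0" using kpos by simp
        moreover have "min m (\<kappa>$j0) \<le> \<kappa>$j0" by simp
        ultimately show ?thesis unfolding e_def by linarith
      qed
      define \<epsilon> where "\<epsilon> = (if qf t0 * ht \<kappa> p > 0 then - e else e)"
      have abse: "\<bar>\<epsilon>\<bar> = e" using epos by (simp add: \<epsilon>_def)
      define \<kappa>' where "\<kappa>' = \<kappa> + \<epsilon> *\<^sub>R axis j0 1"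
      have kp': "\<forall>j. 0 < \<kappa>'$j"
      proof
        fix j
        show "0 < \<kappa>'$j"
        proof (cases "j = j0")
          case True
          then have "\<kappa>'$j = \<kappa>$j0 + \<epsilon>" by (simp add: \<kappa>'_def axis_def)
          then show ?thesis using abse ek by (auto simp: abs_le_iff)
        next
          case False
          then show ?thesis using kpos by (simp add: \<kappa>'_def axis_def)
        qed
      qed
      have small: "\<bar>\<epsilon> * qf (w i)\<bar> < \<bar>ht \<kappa> (w i)\<bar>" if iln: "i \<le> n" for i
      proof -
        have h0: "\<bar>ht \<kappa> (w i)\<bar> > 0" using hw_nz[OF iln] by simp
        have "\<bar>\<epsilon> * qf (w i)\<bar> = e * \<bar>qf (w i)\<bar>" using abse by (simp add: abs_mult)
        also have "\<dots> \<le> m * \<bar>qf (w i)\<bar>" using em by (simp add: mult_right_mono)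
        also have "\<dots> \<le> \<bar>ht \<kappa> (w i)\<bar> / (\<bar>qf (w i)\<bar> + 1) * \<bar>qf (w i)\<bar>"
          by (rule mult_right_mono[OF mle[OF iln]]) simp
        also have "\<dots> < \<bar>ht \<kappa> (w i)\<bar>"
        proof -
          have "\<bar>qf (w i)\<bar> / (\<bar>qf (w i)\<bar> + 1) < 1" by simp
          then have "\<bar>ht \<kappa> (w i)\<bar> * (\<bar>qf (w i)\<bar> / (\<bar>qf (w i)\<bar> + 1)) < \<bar>ht \<kappa> (w i)\<bar> * 1"
            using h0 by (intro mult_strict_left_mono) auto
          then show ?thesis by simp
        qed
        finally show ?thesis .
      qed
      have same: "0 < ht \<kappa>' (w i) * ht \<kappa> (w i)" if iln: "i \<le> n" for i
        unfolding \<kappa>'_def pert by (rule pert_sign[OF small[OF iln]])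
      have c1: "ht \<kappa>' t0 * ht \<kappa>' (w 0) < 0"
      proof -
        have ht0: "ht \<kappa>' t0 = \<epsilon> * qf t0" unfolding \<kappa>'_def pert using True by simp
        have "\<epsilon> * qf t0 * ht \<kappa> p < 0"
        proof (cases "qf t0 * ht \<kappa> p > 0")
          case True then show ?thesis using epos by (simp add: \<epsilon>_def mult_ac)
        next
          case False
          then have "qf t0 * ht \<kappa> p < 0" using qf0 hp by (simp add: not_less le_less mult_eq_0_iff)
          then show ?thesis using epos False by (simp add: \<epsilon>_def mult_ac mult_pos_neg)
        qed
        then have a: "(\<epsilon> * qf t0) * ht \<kappa> p < 0" by simp
        have "\<epsilon> * qf t0 \<noteq> 0" using a by auto
        then have xx: "0 < (\<epsilon> * qf t0) * (\<epsilon> * qf t0)" by (metis not_real_square_gt_zero)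
        have b: "0 < ht \<kappa>' p * ht \<kappa> p" using same[of 0] w0 by simp
        have "(\<epsilon> * qf t0) * ht \<kappa>' p < 0" by (rule sign_trans[OF a xx b])
        then show ?thesis using ht0 w0 by simp
      qed
      have c2: "\<forall>i<n. ht \<kappa>' (w i) * ht \<kappa>' (w (Suc i)) < 0"
        using sign_trans w_alt_ht same by (meson Suc_leI less_imp_le)
      show False using count_new[OF kp' c1 c2] .
    qed
  qed
  define a where "a = card {z\<in>T. g' z < 0}"
  define b where "b = card {z\<in>T. 0 < g' z}"
  have ab: "a + b = 2*N+1" using card_split n_def a_def b_def by simp
  have mc: "int a - int b = (if g p > 0 then 1 else 0) - (if g q > 0 then 1 else 0)"
    using main_count a_def b_def by simp
  have r1: "a = N+1" if "g p > 0"
  proof (cases "g q > 0")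
    case True then have "int a = int b" using mc that by simp
    then show ?thesis using ab by presburger
  next
    case False then have "int a = int b + 1" using mc that by simp
    then show ?thesis using ab by presburger
  qed
  have r2: "a = N" if "\<not> g p > 0"
  proof (cases "g q > 0")
    case True then have "int b = int a + 1" using mc that by simp
    then show ?thesis using ab by presburger
  next
    case False then have "int a = int b" using mc that by simp
    then show ?thesis using ab by presburger
  qed
  show ?thesis unfolding Sig card_stable a_def[symmetric] using KC r1 r2 by auto
qed

end
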